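(* Let $\hat G_0(\omega,\mathbf x,\mathbf y)=\frac{1}{4\pi|\mathbf x-\mathbf y|}e^{i\frac{\omega}{c_o}|\mathbf x-\mathbf y|}$ be the homogeneous Green's function, and suppose the Green's function of the medium with $J$ small inclusions at $\mathbf z_1,\dots,\mathbf z_J$ has the expansion $$\hat G(\omega,\mathbf x,\mathbf y)=\hat G_0(\omega,\mathbf x,\mathbf y)+\sum_{j=1}^J\rho(\omega)\hat G_0(\omega,\mathbf x,\mathbf z_j)\hat G_0(\omega,\mathbf y,\mathbf z_j)+\sum_{j=1}^J\nabla_{\mathbf z}\hat G_0(\omega,\mathbf x,\mathbf z_j)^T\mathbf M(\omega)\nabla_{\mathbf z}\hat G_0(\omega,\mathbf y,\mathbf z_j),$$ with $\rho(\omega)\in\mathbb C$ and $\mathbf M(\omega)$ a symmetric complex $3\times3$ matrix. Suppose the noise support function $K$ completely surrounds the region containing the two points $\mathbf x_r,\mathbf x_{r'}$ and the inclusions $\mathbf z_j$. Then (to first order in $\rho$ and $\mathbf M$) the kernel $\hat Q(\omega,\mathbf x_r,\mathbf x_{r'})=\int_{\mathbb R^3}K(\mathbf y)\overline{\hat G(\omega,\mathbf x_r,\mathbf y)}\hat G(\omega,\mathbf x_{r'},\mathbf y)d\mathbf y$ can be expanded as $$\hat Q(\omega,\mathbf x_r,\mathbf x_{r'})=\frac{c_o}{\omega}{\rm Im}\big(\hat G_0(\omega,\mathbf x_r,\mathbf x_{r'})\big)+\frac{c_o}{\omega}\sum_{j=1}^J{\rm Im}\Big(\rho(\omega)\hat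 G_0(\omega,\mathbf x_r,\mathbf z_j)\hat G_0(\omega,\mathbf x_{r'},\mathbf z_j)\Big)-\frac{c_o}{\omega}\sum_{j=1}^J{\rm Im}(\rho(\omega))\overline{\hat G_0(\omega,\mathbf x_r,\mathbf z_j)}\hat G_0(\omega,\mathbf x_{r'},\mathbf z_j)$$ $$+\frac{c_o}{\omega}\sum_{j=1}^J{\rm Im}\Big(\nabla_{\mathbf z}\hat G_0(\omega,\mathbf x_r,\mathbf z_j)^T\mathbf M(\omega)\nabla_{\mathbf z}\hat G_0(\omega,\mathbf x_{r'},\mathbf z_j)\Big)-\frac{c_o}{\omega}\sum_{j=1}^J\nabla_{\mathbf z}\overline{\hat G_0(\omega,\mathbf x_r,\mathbf z_j)}^T{\rm Im}(\mathbf M(\omega))\nabla_{\mathbf z}\hat G_0(\omega,\mathbf x_{r'},\mathbf z_j).$$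
   Context: $c_o$ is the background wave speed. $K$ is the spatial support function of delta-correlated noise sources (covariance $F(t_2-t_1)K(\mathbf y_1)\delta(\mathbf y_1-\mathbf y_2)$). "Completely surrounds" refers to full-aperture illumination, e.g. $K$ the uniform surface measure on a sphere $\partial B(\mathbf 0,L)$ with $L\to\infty$. ${\rm Im}(\mathbf M)$ is the entrywise imaginary part. *)

theory Defs
  imports "HOL-Analysis.Analysis" "HOL-Library.Landau_Symbols"
begin

definition G0 :: "real \<Rightarrow> real \<Rightarrow> real^3 \<Rightarrow> real^3 \<Rightarrow> complex" where
  "G0 c0 \<omega> x y = exp (\<i> * complex_of_real (\<omega> / c0 * dist x y)) / complex_of_real (4 * pi * dist x y)"

definition grad :: "(real^3 \<Rightarrow> complex) \<Rightarrow> real^3 \<Rightarrow> complex^3" where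
  "grad f z = (\<chi> k. vector_derivative (\<lambda>s::real. f (z + s *\<^sub>R axis k 1)) (at 0))"

definition bil :: "complex^3 \<Rightarrow> complex^3^3 \<Rightarrow> complex^3 \<Rightarrow> complex" where
  "bil u A v = (\<Sum>i\<in>UNIV. \<Sum>j\<in>UNIV. u$i * A$i$j * v$j)"

definition ImM :: "complex^3^3 \<Rightarrow> complex^3^3" where
  "ImM A = (\<chi> i j. complex_of_real (Im (A$i$j)))"

text \<open>Green's function of the medium with J small inclusions at z 0, ..., z (J-1).\<close>
definition Gfull :: "real \<Rightarrow> real \<Rightarrow> nat \<Rightarrow> (nat \<Rightarrow> real^3) \<Rightarrow> complex \<Rightarrow> complex^3^3
                      \<Rightarrow> real^3 \<Rightarrow> real^3 \<Rightarrow> complex" where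
  "Gfull c0 \<omega> J z \<rho> M x y =
     G0 c0 \<omega> x y
     + (\<Sum>j<J. \<rho> * G0 c0 \<omega> x (z j) * G0 c0 \<omega> y (z j))
     + (\<Sum>j<J. bil (grad (G0 c0 \<omega> x) (z j)) M (grad (G0 c0 \<omega> y) (z j)))"

definition sph :: "real \<Rightarrow> real \<Rightarrow> real \<Rightarrow> real^3" where
  "sph L \<theta> \<phi> = vector [L * sin \<theta> * cos \<phi>, L * sin \<theta> * sin \<phi>, L * cos \<theta>]"

text \<open>Integral against the (unnormalised) uniform surface measure of the sphere dB(0,L).\<close>
definition sphere_int :: "real \<Rightarrow> (real^3 \<Rightarrow> complex) \<Rightarrow> complex" where
  "sphere_int L f = integral {0..pi} (\<lambda>\<theta>. integral {0..2*pi}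
       (\<lambda>\<phi>. complex_of_real (L^2 * sin \<theta>) * f (sph L \<theta> \<phi>)))"

text \<open>Kernel Q with K the surface measure on dB(0,L).\<close>
definition QL :: "real \<Rightarrow> real \<Rightarrow> nat \<Rightarrow> (nat \<Rightarrow> real^3) \<Rightarrow> complex \<Rightarrow> complex^3^3
                   \<Rightarrow> real \<Rightarrow> real^3 \<Rightarrow> real^3 \<Rightarrow> complex" where
  "QL c0 \<omega> J z \<rho> M L xr xr' =
     sphere_int L (\<lambda>y. cnj (Gfull c0 \<omega> J z \<rho> M xr y) * Gfull c0 \<omega> J z \<rho> M xr' y)"

definition Qexp :: "real \<Rightarrow> real \<Rightarrow> nat \<Rightarrow> (nat \<Rightarrow> real^3) \<Rightarrow> complex \<Rightarrow> complex^3^3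
                   \<Rightarrow> real^3 \<Rightarrow> real^3 \<Rightarrow> complex" where
  "Qexp c0 \<omega> J z \<rho> M xr xr' =
     complex_of_real (c0/\<omega>) * complex_of_real (Im (G0 c0 \<omega> xr xr'))
   + complex_of_real (c0/\<omega>) * (\<Sum>j<J. complex_of_real
        (Im (\<rho> * G0 c0 \<omega> xr (z j) * G0 c0 \<omega> xr' (z j))))
   - complex_of_real (c0/\<omega>) * (\<Sum>j<J. complex_of_real (Im \<rho>)
        * cnj (G0 c0 \<omega> xr (z j)) * G0 c0 \<omega> xr' (z j))
   + complex_of_real (c0/\<omega>) * (\<Sum>j<J. complex_of_real
        (Im (bil (grad (G0 c0 \<omega> xr) (z j)) M (grad (G0 c0 \<omega> xr') (z j)))))
   - complex_of_real (c0/\<omega>) * (\<Sum>j<J.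
        bil (grad (\<lambda>w. cnj (G0 c0 \<omega> xr w)) (z j)) (ImM M) (grad (G0 c0 \<omega> xr') (z j)))"

text \<open>Scaling of the contrast parameters, used to express "to first order in rho and M".\<close>
definition scaleM :: "real \<Rightarrow> complex^3^3 \<Rightarrow> complex^3^3" where
  "scaleM t M = (\<chi> i j. complex_of_real t * M$i$j)"

end

theory Submission
  imports Defs
begin

definition BX :: "(real \<times> real) set" where "BX = cbox (0,0) (pi, 2*pi)"

lemma inner3: "inner (x::real^3) y = x$1*y$1 + x$2*y$2 + x$3*y$3"
  unfolding inner_vec_def by (simp add: sum_3)

lemma norm3: "norm (x::real^3) = sqrt ((x$1)^2 + (x$2)^2 + (x$3)^2)"
  unfolding norm_eq_sqrt_inner inner3 by (simp add: power2_eq_square)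

lemma sph_comp: "sph L t p $ 1 = L * sin t * cos p" "sph L t p $ 2 = L * sin t * sin p"
  "sph L t p $ 3 = L * cos t"
  unfolding sph_def by simp_all

lemma sph_scale: "sph L t p = L *\<^sub>R sph 1 t p"
  by (simp add: vec_eq_iff forall_3 sph_comp)

lemma sph_alt: "sph L t p = (\<chi> i. if i = 1 then L * sin t * cos p else if i = 2 then L * sin t * sin p else L * cos t)"
  by (simp add: vec_eq_iff forall_3 sph_comp)

lemma norm_sph1: "norm (sph 1 t p) = 1"
proof -
  have "(sin t * cos p)^2 + (sin t * sin p)^2 + (cos t)^2 = (sin t)^2 * ((sin p)^2 + (cos p)^2) + (cos t)^2"
    by (simp only: power_mult_distrib distrib_left)
  also have "\<dots> = 1" by simp
  finally have e: "(sin t * cos p)^2 + (sin t * sin p)^2 + (cos t)^2 = 1" .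
  have "norm (sph 1 t p) = sqrt ((sin t * cos p)^2 + (sin t * sin p)^2 + (cos t)^2)"
    by (simp add: norm3 sph_comp)
  then show ?thesis using e by simp
qed

lemma norm_sph: "L \<ge> 0 \<Longrightarrow> norm (sph L t p) = L"
  by (subst sph_scale) (simp add: norm_sph1)

lemma continuous_sph[continuous_intros]:
  fixes f g :: "'a::t2_space \<Rightarrow> real"
  assumes "continuous_on S f" "continuous_on S g"
  shows "continuous_on S (\<lambda>x. sph L (f x) (g x))"
  unfolding sph_alt
  apply (rule continuous_on_vec_lambda)
  subgoal for i using assms by (cases "i = 1"; cases "i = 2") (auto intro!: continuous_intros)
  done

lemma inner_sph1: "inner c (sph 1 t p) = c$1 * sin t * cos p + c$2 * sin t * sin p + c$3 * cos t"
  by (simp add: inner3 sph_comp)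


lemma sphere_int_eq:
  assumes "continuous_on (cbox (0,0) (pi,2*pi)) (\<lambda>p. f (sph L (fst p) (snd p)))"
  shows "sphere_int L f = integral BX (\<lambda>p. complex_of_real (L^2 * sin (fst p)) * f (sph L (fst p) (snd p)))"
proof -
  have "integral (cbox (0,0) (pi,2*pi)) (\<lambda>p. complex_of_real (L^2 * sin (fst p)) * f (sph L (fst p) (snd p)))
     = integral (cbox 0 pi) (\<lambda>x. integral (cbox 0 (2*pi)) (\<lambda>y. complex_of_real (L^2 * sin x) * f (sph L x y)))"
    by (subst integral_prod_continuous) (auto intro!: continuous_intros assms)
  then show ?thesis unfolding sphere_int_def BX_def by (simp add: cbox_interval)
qed

lemma exp_i_diff_le: "norm (exp (\<i> * complex_of_real x) - exp (\<i> * complex_of_real y)) \<le> \<bar>x - y\<bar>"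
proof -
  have e: "exp (\<i> * complex_of_real x) - exp (\<i> * complex_of_real y)
      = exp (\<i> * complex_of_real y) * (exp (\<i> * complex_of_real (x - y)) - 1)"
    by (simp add: algebra_simps flip: exp_add)
  have "norm (exp (\<i> * complex_of_real (x - y)) - 1) \<le> \<bar>x - y\<bar>"
  proof -
    define t where "t = x - y"
    have "(norm (exp (\<i> * complex_of_real t) - 1))^2 = (cos t - 1)^2 + (sin t)^2"
      by (simp add: cmod_def exp_Euler cos_of_real sin_of_real)
    also have "\<dots> = 2 - 2 * cos t" by (simp add: power2_eq_square algebra_simps)
    also have "\<dots> = 4 * (sin (t/2))^2"
      using cos_double_sin[of "t/2"] by simp
    also have "\<dots> \<le> 4 * (t/2)^2"
      using abs_sin_x_le_abs_x[of "t/2"] abs_le_square_iff by fastforce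
    also have "\<dots> = t^2" by (simp add: power2_eq_square)
    finally have "(norm (exp (\<i> * complex_of_real t) - 1))^2 \<le> \<bar>t\<bar>^2" by simp
    then show ?thesis unfolding t_def by (simp add: abs_le_square_iff[symmetric])
  qed
  then show ?thesis unfolding e by (simp add: norm_mult)
qed

definition rad :: "real \<Rightarrow> (real^3 \<Rightarrow> complex) \<Rightarrow> (real^3 \<Rightarrow> complex) \<Rightarrow> bool" where
  "rad k u U \<longleftrightarrow> continuous_on UNIV U \<and> (\<exists>L0 C B. 0 < L0 \<and> 0 \<le> C \<and> 0 \<le> B \<and>
     continuous_on {y. L0 \<le> norm y} u \<and> (\<forall>y. norm y = 1 \<longrightarrow> norm (U y) \<le> B) \<and>
     (\<forall>L y. L0 \<le> L \<longrightarrow> norm y = 1 \<longrightarrow>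
        norm (complex_of_real L * exp (- \<i> * complex_of_real (k * L)) * u (L *\<^sub>R y) - U y) \<le> C / L))"

lemma radI:
  assumes "continuous_on UNIV U" "0 < Lz" "0 \<le> Cc" "0 \<le> Bb" "continuous_on {y. Lz \<le> norm y} u"
    "\<And>y. norm y = 1 \<Longrightarrow> norm (U y) \<le> Bb"
    "\<And>L y. Lz \<le> L \<Longrightarrow> norm y = 1 \<Longrightarrow>
        norm (complex_of_real L * exp (- \<i> * complex_of_real (k * L)) * u (L *\<^sub>R y) - U y) \<le> Cc / L"
  shows "rad k u U"
  unfolding rad_def using assms by blast

lemma radE:
  assumes "rad k u U"
  obtains L0 C B where "continuous_on UNIV U" "0 < L0" "0 \<le> C" "0 \<le> B" "continuous_on {y. L0 \<le> norm y} u"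
    "\<And>y. norm y = 1 \<Longrightarrow> norm (U y) \<le> B"
    "\<And>L y. L0 \<le> L \<Longrightarrow> norm y = 1 \<Longrightarrow>
        norm (complex_of_real L * exp (- \<i> * complex_of_real (k * L)) * u (L *\<^sub>R y) - U y) \<le> C / L"
  using assms unfolding rad_def by blast

lemma rad_zero: "rad k (\<lambda>y. 0) (\<lambda>y. 0)"
  by (rule radI[where Lz=1 and Cc=0 and Bb=0]) auto

lemma rad_add:
  assumes "rad k u U" "rad k v V"
  shows "rad k (\<lambda>y. u y + v y) (\<lambda>y. U y + V y)"
proof -
  obtain L1 C1 B1 where 1: "continuous_on UNIV U" "0 < L1" "0 \<le> C1" "0 \<le> B1" "continuous_on {y. L1 \<le> norm y} u"
    "\<And>y. norm y = 1 \<Longrightarrow> norm (U y) \<le> B1"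
    "\<And>L y. L1 \<le> L \<Longrightarrow> norm y = 1 \<Longrightarrow>
        norm (complex_of_real L * exp (- \<i> * complex_of_real (k * L)) * u (L *\<^sub>R y) - U y) \<le> C1 / L"
    using radE[OF assms(1)] by blast
  obtain L2 C2 B2 where 2: "continuous_on UNIV V" "0 < L2" "0 \<le> C2" "0 \<le> B2" "continuous_on {y. L2 \<le> norm y} v"
    "\<And>y. norm y = 1 \<Longrightarrow> norm (V y) \<le> B2"
    "\<And>L y. L2 \<le> L \<Longrightarrow> norm y = 1 \<Longrightarrow>
        norm (complex_of_real L * exp (- \<i> * complex_of_real (k * L)) * v (L *\<^sub>R y) - V y) \<le> C2 / L"
    using radE[OF assms(2)] by blast
  show ?thesis
  proof (rule radI[where Lz="max L1 L2" and Cc="C1 + C2" and Bb="B1+B2"])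
    show "continuous_on UNIV (\<lambda>y. U y + V y)" using 1 2 by (intro continuous_intros)
    show "continuous_on {y. max L1 L2 \<le> norm y} (\<lambda>y. u y + v y)"
      by (intro continuous_intros continuous_on_subset[OF 1(5)] continuous_on_subset[OF 2(5)]) auto
    show "norm (U y + V y) \<le> B1 + B2" if "norm y = 1" for y
      using 1(6)[OF that] 2(6)[OF that] norm_triangle_ineq[of "U y" "V y"] by linarith
    show "norm (complex_of_real L * exp (- \<i> * complex_of_real (k * L)) * (u (L *\<^sub>R y) + v (L *\<^sub>R y)) - (U y + V y)) \<le> (C1 + C2) / L"
      if "max L1 L2 \<le> L" "norm y = 1" for L y
    proof -
      have "complex_of_real L * exp (- \<i> * complex_of_real (k * L)) * (u (L *\<^sub>R y) + v (L *\<^sub>R y)) - (U y + V y)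
        = (complex_of_real L * exp (- \<i> * complex_of_real (k * L)) * u (L *\<^sub>R y) - U y)
        + (complex_of_real L * exp (- \<i> * complex_of_real (k * L)) * v (L *\<^sub>R y) - V y)"
        by (simp add: algebra_simps)
      also have "norm \<dots> \<le> C1 / L + C2 / L"
        using 1(7)[of L y] 2(7)[of L y] that norm_triangle_ineq[of "complex_of_real L * exp (- \<i> * complex_of_real (k * L)) * u (L *\<^sub>R y) - U y" "complex_of_real L * exp (- \<i> * complex_of_real (k * L)) * v (L *\<^sub>R y) - V y"] by simp
      finally show ?thesis by (simp add: add_divide_distrib)
    qed
  qed (use 1(2,3,4) 2(2,3,4) in auto)
qed

lemma rad_cmult:
  assumes "rad k u U"
  shows "rad k (\<lambda>y. c * u y) (\<lambda>y. c * U y)"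
proof -
  obtain L1 C1 B1 where 1: "continuous_on UNIV U" "0 < L1" "0 \<le> C1" "0 \<le> B1" "continuous_on {y. L1 \<le> norm y} u"
    "\<And>y. norm y = 1 \<Longrightarrow> norm (U y) \<le> B1"
    "\<And>L y. L1 \<le> L \<Longrightarrow> norm y = 1 \<Longrightarrow>
        norm (complex_of_real L * exp (- \<i> * complex_of_real (k * L)) * u (L *\<^sub>R y) - U y) \<le> C1 / L"
    using radE[OF assms(1)] by blast
  show ?thesis
  proof (rule radI[where Lz="L1" and Cc="norm c * C1" and Bb="norm c * B1"])
    show "norm (c * U y) \<le> norm c * B1" if "norm y = 1" for y
      using 1(6)[OF that] by (simp add: norm_mult mult_left_mono)
    show "norm (complex_of_real L * exp (- \<i> * complex_of_real (k * L)) * (c * u (L *\<^sub>R y)) - c * U y) \<le> norm c * C1 / L"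
      if "L1 \<le> L" "norm y = 1" for L y
    proof -
      have "complex_of_real L * exp (- \<i> * complex_of_real (k * L)) * (c * u (L *\<^sub>R y)) - c * U y
        = c * (complex_of_real L * exp (- \<i> * complex_of_real (k * L)) * u (L *\<^sub>R y) - U y)"
        by (simp add: algebra_simps)
      also have "norm \<dots> \<le> norm c * (C1 / L)"
        unfolding norm_mult using 1(7)[OF that] by (intro mult_left_mono) auto
      finally show ?thesis by simp
    qed
  qed (use 1(1-5) in \<open>auto intro!: continuous_intros\<close>)
qed

lemma rad_sum:
  assumes "finite A" "\<And>i. i \<in> A \<Longrightarrow> rad k (u i) (U i)"
  shows "rad k (\<lambda>y. \<Sum>i\<in>A. u i y) (\<lambda>y. \<Sum>i\<in>A. U i y)"
  using assms
proof (induction A rule: finite_induct)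
  case empty
  then show ?case using rad_zero by simp
next
  case (insert x F)
  then show ?case by (simp add: rad_add)
qed


definition Iu :: "(real^3 \<Rightarrow> complex) \<Rightarrow> complex" where
  "Iu f = integral BX (\<lambda>p. complex_of_real (sin (fst p)) * f (sph 1 (fst p) (snd p)))"

lemma rad_mult:
  assumes "rad k u U" "continuous_on UNIV F" "0 < Lf" "0 \<le> Cf" "0 \<le> Bf"
    "continuous_on {y. Lf \<le> norm y} f" "\<And>y. norm y = 1 \<Longrightarrow> norm (F y) \<le> Bf"
    "\<And>L y. Lf \<le> L \<Longrightarrow> norm y = 1 \<Longrightarrow> norm (f (L *\<^sub>R y) - F y) \<le> Cf / L"
  shows "rad k (\<lambda>y. f y * u y) (\<lambda>y. F y * U y)"
proof -
  obtain L1 C1 B1 where 1: "continuous_on UNIV U" "0 < L1" "0 \<le> C1" "0 \<le> B1" "continuous_on {y. L1 \<le> norm y} u"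
    "\<And>y. norm y = 1 \<Longrightarrow> norm (U y) \<le> B1"
    "\<And>L y. L1 \<le> L \<Longrightarrow> norm y = 1 \<Longrightarrow>
        norm (complex_of_real L * exp (- \<i> * complex_of_real (k * L)) * u (L *\<^sub>R y) - U y) \<le> C1 / L"
    using radE[OF assms(1)] by blast
  show ?thesis
  proof (rule radI[where Lz="max L1 Lf" and Cc="Cf * (B1 + C1 / L1) + Bf * C1" and Bb="Bf * B1"])
    show "continuous_on UNIV (\<lambda>y. F y * U y)" using 1(1) assms(2) by (intro continuous_intros)
    show "continuous_on {y. max L1 Lf \<le> norm y} (\<lambda>y. f y * u y)"
      by (intro continuous_intros continuous_on_subset[OF 1(5)] continuous_on_subset[OF assms(6)]) auto
    show "norm (F y * U y) \<le> Bf * B1" if "norm y = 1" for y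
      using 1(6)[OF that] assms(7)[OF that] 1(4) assms(5) by (simp add: norm_mult mult_mono)
    show "norm (complex_of_real L * exp (- \<i> * complex_of_real (k * L)) * (f (L *\<^sub>R y) * u (L *\<^sub>R y)) - F y * U y)
        \<le> (Cf * (B1 + C1 / L1) + Bf * C1) / L"
      if L: "max L1 Lf \<le> L" and y: "norm y = 1" for L y
    proof -
      define a where "a = complex_of_real L * exp (- \<i> * complex_of_real (k * L)) * u (L *\<^sub>R y)"
      have Lpos: "L > 0" using L 1(2) by linarith
      have ea: "norm (a - U y) \<le> C1 / L" unfolding a_def using 1(7)[of L y] L y by simp
      have ef: "norm (f (L *\<^sub>R y) - F y) \<le> Cf / L" using assms(8)[of L y] L y by simp
      have "C1 / L \<le> C1 / L1" using L 1(2,3) by (simp add: divide_left_mono)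
      then have na: "norm a \<le> B1 + C1 / L1"
        using ea 1(6)[OF y] norm_triangle_ineq2[of a "U y"] by linarith
      have "complex_of_real L * exp (- \<i> * complex_of_real (k * L)) * (f (L *\<^sub>R y) * u (L *\<^sub>R y)) - F y * U y
          = (f (L *\<^sub>R y) - F y) * a + F y * (a - U y)"
        unfolding a_def by (simp add: algebra_simps)
      also have "norm \<dots> \<le> norm (f (L *\<^sub>R y) - F y) * norm a + norm (F y) * norm (a - U y)"
        by (metis norm_mult norm_triangle_ineq)
      also have "\<dots> \<le> (Cf / L) * (B1 + C1 / L1) + Bf * (C1 / L)"
        using ef na ea assms(7)[OF y] assms(4,5) Lpos
        by (intro add_mono mult_mono) auto
      also have "\<dots> = (Cf * (B1 + C1 / L1) + Bf * C1) / L" using Lpos by (simp add: field_simps)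
      finally show ?thesis .
    qed
  qed (use 1(2,3,4) assms(3,4,5) in auto)
qed

lemma cont_sph_comp:
  assumes "continuous_on {y. L0 \<le> norm y} u" "L0 \<le> L"
  shows "continuous_on S (\<lambda>p. u (sph L (fst p) (snd p)))"
proof -
  have "continuous_on S (\<lambda>p. sph L (fst p) (snd p))" by (intro continuous_intros)
  moreover have "(\<lambda>p. sph L (fst p) (snd p)) ` S \<subseteq> {y. L0 \<le> norm y}"
    using assms(2) norm_sph[of L] by (auto simp: norm_sph) (smt (verit) norm_ge_zero norm_sph)
  ultimately show ?thesis using continuous_on_compose2[OF assms(1)] by blast
qed

lemma content_BX: "measure lborel BX = 2 * pi^2"
  unfolding BX_def by (simp add: content_Pair power2_eq_square)


lemma rad_lim:
  assumes "rad k u U" "rad k v V"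
  shows "((\<lambda>L. sphere_int L (\<lambda>y. cnj (u y) * v y)) \<longlongrightarrow> Iu (\<lambda>y. cnj (U y) * V y)) at_top"
proof -
  obtain L1 C1 B1 where 1: "continuous_on UNIV U" "0 < L1" "0 \<le> C1" "0 \<le> B1" "continuous_on {y. L1 \<le> norm y} u"
    "\<And>y. norm y = 1 \<Longrightarrow> norm (U y) \<le> B1"
    "\<And>L y. L1 \<le> L \<Longrightarrow> norm y = 1 \<Longrightarrow>
        norm (complex_of_real L * exp (- \<i> * complex_of_real (k * L)) * u (L *\<^sub>R y) - U y) \<le> C1 / L"
    using radE[OF assms(1)] by blast
  obtain L2 C2 B2 where 2: "continuous_on UNIV V" "0 < L2" "0 \<le> C2" "0 \<le> B2" "continuous_on {y. L2 \<le> norm y} v"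
    "\<And>y. norm y = 1 \<Longrightarrow> norm (V y) \<le> B2"
    "\<And>L y. L2 \<le> L \<Longrightarrow> norm y = 1 \<Longrightarrow>
        norm (complex_of_real L * exp (- \<i> * complex_of_real (k * L)) * v (L *\<^sub>R y) - V y) \<le> C2 / L"
    using radE[OF assms(2)] by blast
  define K where "K = (C1 * (B2 + C2 / L2) + B1 * C2) * measure lborel BX"
  have main: "norm (sphere_int L (\<lambda>y. cnj (u y) * v y) - Iu (\<lambda>y. cnj (U y) * V y)) \<le> K / L"
    if L: "max L1 L2 \<le> L" for L
  proof -
    have Lpos: "L > 0" using L 1(2) by linarith
    define e where "e = exp (- \<i> * complex_of_real (k * L))"
    define a where "a p = complex_of_real L * e * u (L *\<^sub>R sph 1 (fst p) (snd p))" for p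
    define b where "b p = complex_of_real L * e * v (L *\<^sub>R sph 1 (fst p) (snd p))" for p
    have ee: "cnj e * e = 1" unfolding e_def
      by (simp add: exp_cnj flip: exp_add)
    have cu: "continuous_on BX (\<lambda>p. u (sph L (fst p) (snd p)))"
      using cont_sph_comp[OF 1(5)] L by auto
    have cv: "continuous_on BX (\<lambda>p. v (sph L (fst p) (snd p)))"
      using cont_sph_comp[OF 2(5)] L by auto
    have cU: "continuous_on BX (\<lambda>p. U (sph 1 (fst p) (snd p)))"
      using cont_sph_comp[OF continuous_on_subset[OF 1(1)], of 1 1] by auto
    have cV: "continuous_on BX (\<lambda>p. V (sph 1 (fst p) (snd p)))"
      using cont_sph_comp[OF continuous_on_subset[OF 2(1)], of 1 1] by auto
    have "sphere_int L (\<lambda>y. cnj (u y) * v y)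
        = integral BX (\<lambda>p. complex_of_real (L^2 * sin (fst p)) * (cnj (u (sph L (fst p) (snd p))) * v (sph L (fst p) (snd p))))"
      by (rule sphere_int_eq) (use cu cv in \<open>auto simp: BX_def intro!: continuous_intros\<close>)
    also have "\<dots> = integral BX (\<lambda>p. complex_of_real (sin (fst p)) * (cnj (a p) * b p))"
    proof (rule integral_cong)
      fix p
      have "cnj (a p) * b p = complex_of_real (L^2) * (cnj e * e) * (cnj (u (sph L (fst p) (snd p))) * v (sph L (fst p) (snd p)))"
        unfolding a_def b_def by (simp add: sph_scale[of L] power2_eq_square algebra_simps)
      then show "complex_of_real (L^2 * sin (fst p)) * (cnj (u (sph L (fst p) (snd p))) * v (sph L (fst p) (snd p)))
          = complex_of_real (sin (fst p)) * (cnj (a p) * b p)"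
        by (simp add: ee)
    qed
    finally have eq1: "sphere_int L (\<lambda>y. cnj (u y) * v y) = integral BX (\<lambda>p. complex_of_real (sin (fst p)) * (cnj (a p) * b p))" .
    have ca: "continuous_on BX a" unfolding a_def
      using cu by (intro continuous_intros) (simp add: sph_scale[of L, symmetric])
    have cb: "continuous_on BX b" unfolding b_def
      using cv by (intro continuous_intros) (simp add: sph_scale[of L, symmetric])
    have i1: "(\<lambda>p. complex_of_real (sin (fst p)) * (cnj (a p) * b p)) integrable_on BX"
      unfolding BX_def by (rule integrable_continuous) (use ca cb in \<open>auto simp: BX_def intro!: continuous_intros\<close>)
    have i2: "(\<lambda>p. complex_of_real (sin (fst p)) * (cnj (U (sph 1 (fst p) (snd p))) * V (sph 1 (fst p) (snd p)))) integrable_on BX"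
      unfolding BX_def by (rule integrable_continuous) (use cU cV in \<open>auto simp: BX_def intro!: continuous_intros\<close>)
    have "sphere_int L (\<lambda>y. cnj (u y) * v y) - Iu (\<lambda>y. cnj (U y) * V y)
       = integral BX (\<lambda>p. complex_of_real (sin (fst p)) * (cnj (a p) * b p - cnj (U (sph 1 (fst p) (snd p))) * V (sph 1 (fst p) (snd p))))"
      unfolding eq1 Iu_def by (subst integral_diff[OF i1 i2, symmetric]) (simp add: algebra_simps)
    also have "norm \<dots> \<le> ((C1 / L) * (B2 + C2 / L2) + B1 * (C2 / L)) * measure lborel BX"
    proof -
      have "norm (complex_of_real (sin (fst p)) * (cnj (a p) * b p - cnj (U (sph 1 (fst p) (snd p))) * V (sph 1 (fst p) (snd p))))
          \<le> (C1 / L) * (B2 + C2 / L2) + B1 * (C2 / L)" for p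
      proof -
        define y where "y = sph 1 (fst p) (snd p)"
        have y: "norm y = 1" unfolding y_def by (rule norm_sph1)
        have ea: "norm (a p - U y) \<le> C1 / L" unfolding a_def e_def y_def using 1(7)[of L] L y y_def by simp
        have eb: "norm (b p - V y) \<le> C2 / L" unfolding b_def e_def y_def using 2(7)[of L] L y y_def by simp
        have "C2 / L \<le> C2 / L2" using L 2(2,3) by (simp add: divide_left_mono)
        then have nb: "norm (b p) \<le> B2 + C2 / L2"
          using eb 2(6)[OF y] norm_triangle_ineq2[of "b p" "V y"] by linarith
        have "cnj (a p) * b p - cnj (U y) * V y = cnj (a p - U y) * b p + cnj (U y) * (b p - V y)"
          by (simp add: algebra_simps)
        also have "norm \<dots> \<le> norm (a p - U y) * norm (b p) + norm (U y) * norm (b p - V y)"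
          by (metis complex_mod_cnj norm_mult norm_triangle_ineq)
        also have "\<dots> \<le> (C1 / L) * (B2 + C2 / L2) + B1 * (C2 / L)"
          using ea nb eb 1(6)[OF y] 1(3,4) Lpos by (intro add_mono mult_mono) auto
        finally have n1: "norm (cnj (a p) * b p - cnj (U y) * V y) \<le> (C1 / L) * (B2 + C2 / L2) + B1 * (C2 / L)" .
        have "norm (complex_of_real (sin (fst p))) \<le> 1" by simp
        then have "norm (complex_of_real (sin (fst p))) * norm (cnj (a p) * b p - cnj (U y) * V y)
            \<le> 1 * ((C1 / L) * (B2 + C2 / L2) + B1 * (C2 / L))"
          using n1 by (intro mult_mono) auto
        then show ?thesis unfolding norm_mult y_def[symmetric] by simp
      qed
      moreover have "0 \<le> (C1 / L) * (B2 + C2 / L2) + B1 * (C2 / L)"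
        using 1(3,4) 2(2,3,4) Lpos by (intro add_nonneg_nonneg mult_nonneg_nonneg) auto
      moreover have "(\<lambda>p. complex_of_real (sin (fst p)) * (cnj (a p) * b p - cnj (U (sph 1 (fst p) (snd p))) * V (sph 1 (fst p) (snd p)))) integrable_on BX"
        using integrable_diff[OF i1 i2] by (simp add: algebra_simps)
      ultimately show ?thesis
        unfolding BX_def using has_integral_bound[OF _ integrable_integral] by blast
    qed
    also have "\<dots> = K / L" unfolding K_def using Lpos by (simp add: field_simps)
    finally show ?thesis .
  qed
  have "((\<lambda>L. sphere_int L (\<lambda>y. cnj (u y) * v y) - Iu (\<lambda>y. cnj (U y) * V y)) \<longlongrightarrow> 0) at_top"
  proof (rule Lim_null_comparison)
    show "\<forall>\<^sub>F L in at_top. norm (sphere_int L (\<lambda>y. cnj (u y) * v y) - Iu (\<lambda>y. cnj (U y) * V y)) \<le> K / L"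
      using main eventually_ge_at_top[of "max L1 L2"] by (auto elim: eventually_mono)
    show "((\<lambda>L. K / L) \<longlongrightarrow> 0) at_top" by (intro tendsto_divide_0[OF tendsto_const] filterlim_at_top_imp_at_infinity[OF filterlim_ident])
  qed
  then show ?thesis by (simp add: LIM_zero_iff)
qed


lemma dist_est:
  fixes a y :: "real^3"
  assumes y: "norm y = 1" and L: "2 * norm a + 1 \<le> L"
  defines "d \<equiv> norm (L *\<^sub>R y - a)"
  shows "\<bar>L - d\<bar> \<le> norm a" "L / 2 \<le> d" "\<bar>d - (L - inner a y)\<bar> \<le> (norm a)^2 / L"
proof -
  have Lpos: "L > 0" using L norm_ge_zero[of a] by linarith
  have "\<bar>norm (L *\<^sub>R y) - norm a\<bar> \<le> norm (L *\<^sub>R y - a)" by (rule norm_triangle_ineq3)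
  moreover have "norm (L *\<^sub>R y - a) \<le> norm (L *\<^sub>R y) + norm a" by (rule norm_triangle_ineq4)
  moreover have "norm (L *\<^sub>R y) = L" using y Lpos by simp
  ultimately show 1: "\<bar>L - d\<bar> \<le> norm a" unfolding d_def by linarith
  then show 2: "L / 2 \<le> d" using L by linarith
  define s where "s = inner a y"
  have s: "\<bar>s\<bar> \<le> norm a" unfolding s_def using Cauchy_Schwarz_ineq2[of a y] y by simp
  have yy: "inner y y = 1" using y by (simp add: power2_norm_eq_inner[symmetric])
  have "d^2 = inner (L *\<^sub>R y - a) (L *\<^sub>R y - a)" unfolding d_def by (simp add: power2_norm_eq_inner)
  also have "\<dots> = L^2 * inner y y - 2 * L * inner a y + inner a a"
    by (simp add: inner_diff_left inner_diff_right inner_commute power2_eq_square algebra_simps)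
  finally have dd: "d^2 = L^2 - 2 * L * s + (norm a)^2"
    unfolding s_def yy by (simp add: power2_norm_eq_inner)
  have d0: "d \<ge> 0" unfolding d_def by simp
  have sum_ge: "d + (L - s) \<ge> L" using 2 s L by linarith
  have prod: "(d - (L - s)) * (d + (L - s)) = (norm a)^2 - s^2"
    using dd by (simp add: algebra_simps power2_eq_square)
  have s2: "s^2 \<le> (norm a)^2" using power_mono[OF s abs_ge_zero, of 2] by simp
  have nn: "0 \<le> (norm a)^2 - s^2" using s2 by simp
  have pos: "d + (L - s) > 0" using sum_ge Lpos by linarith
  have eq: "d - (L - s) = ((norm a)^2 - s^2) / (d + (L - s))" using prod pos by (simp add: field_simps)
  have g0: "0 \<le> d - (L - s)" unfolding eq using nn pos by simp
  have "((norm a)^2 - s^2) / (d + (L - s)) \<le> (norm a)^2 / L"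
    using nn sum_ge Lpos s2 by (intro frac_le) auto
  then have "d - (L - s) \<le> (norm a)^2 / L" using eq by simp
  with g0 show "\<bar>d - (L - inner a y)\<bar> \<le> (norm a)^2 / L" unfolding s_def by simp
qed

lemma aux_fr1: "(d::complex) \<noteq> 0 \<Longrightarrow> q \<noteq> 0 \<Longrightarrow> l * x * (y / (q * d)) - z / q = (l * (x * y) / d - z) / q"
  by (simp add: field_simps)

lemma aux_fr2: "(d::complex) \<noteq> 0 \<Longrightarrow> (l * e / d - z) / q = ((l / d - 1) * e + (e - z)) / q"
  by (simp add: field_simps)

lemma rad_G0:
  fixes a :: "real^3" and k c0 \<omega> :: real
  defines "k \<equiv> \<omega> / c0"
  shows "rad k (\<lambda>y. G0 c0 \<omega> a y) (\<lambda>y. exp (- \<i> * complex_of_real (k * inner a y)) / complex_of_real (4*pi))"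
proof (rule radI[where Lz="2 * norm a + 1" and Cc="(2 * norm a + \<bar>k\<bar> * (norm a)^2) / (4*pi)" and Bb="1/(4*pi)"])
  show "continuous_on UNIV (\<lambda>y. exp (- \<i> * complex_of_real (k * inner a y)) / complex_of_real (4*pi))"
    by (intro continuous_intros) auto
  show "continuous_on {y. 2 * norm a + 1 \<le> norm y} (G0 c0 \<omega> a)"
  proof -
    have "dist a y \<noteq> 0" if "2 * norm a + 1 \<le> norm y" for y
    proof
      assume "dist a y = 0"
      then have "a = y" by simp
      then show False using that norm_ge_zero[of a] norm_ge_zero[of y] by simp
    qed
    then show ?thesis unfolding G0_def by (intro continuous_intros) auto
  qed
  show "norm (exp (- \<i> * complex_of_real (k * inner a y)) / complex_of_real (4*pi)) \<le> 1 / (4*pi)" for y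
    by (simp add: norm_divide norm_mult)
  show "norm (complex_of_real L * exp (- \<i> * complex_of_real (k * L)) * G0 c0 \<omega> a (L *\<^sub>R y)
           - exp (- \<i> * complex_of_real (k * inner a y)) / complex_of_real (4*pi))
        \<le> (2 * norm a + \<bar>k\<bar> * (norm a)^2) / (4*pi) / L"
    if L: "2 * norm a + 1 \<le> L" and y: "norm y = 1" for L y
  proof -
    define d where "d = norm (L *\<^sub>R y - a)"
    define s where "s = inner a y"
    have Lpos: "L > 0" using L norm_ge_zero[of a] by linarith
    note est = dist_est[OF y L, folded d_def]
    have dpos: "d > 0" using est(2) Lpos by linarith
    have dist: "dist a (L *\<^sub>R y) = d" unfolding d_def dist_norm by (simp add: norm_minus_commute)
    define E1 where "E1 = exp (\<i> * complex_of_real (k * (d - L)))"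
    define E2 where "E2 = exp (\<i> * complex_of_real (- k * s))"
    have e12: "exp (- \<i> * complex_of_real (k * L)) * exp (\<i> * complex_of_real (k * d)) = E1"
      unfolding E1_def mult_exp_exp by (rule arg_cong[where f=exp]) (simp add: algebra_simps)
    have "complex_of_real L * exp (- \<i> * complex_of_real (k * L)) * G0 c0 \<omega> a (L *\<^sub>R y)
           - exp (- \<i> * complex_of_real (k * inner a y)) / complex_of_real (4*pi)
        = (complex_of_real L * (exp (- \<i> * complex_of_real (k * L)) * exp (\<i> * complex_of_real (k * d))) / complex_of_real d
           - E2) / complex_of_real (4*pi)"
    proof -
      have e2: "exp (- \<i> * complex_of_real (k * inner a y)) = E2" unfolding E2_def s_def by simp
      show ?thesis unfolding G0_def dist k_def[symmetric] e2
        unfolding of_real_mult by (rule aux_fr1) (use dpos in auto)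
    qed
    also have "\<dots> = (complex_of_real (L / d - 1) * E1 + (E1 - E2)) / complex_of_real (4*pi)"
      unfolding e12 of_real_diff of_real_divide of_real_1 by (rule aux_fr2) (use dpos in auto)
    finally have eq: "complex_of_real L * exp (- \<i> * complex_of_real (k * L)) * G0 c0 \<omega> a (L *\<^sub>R y)
           - exp (- \<i> * complex_of_real (k * inner a y)) / complex_of_real (4*pi)
        = (complex_of_real (L / d - 1) * E1 + (E1 - E2)) / complex_of_real (4*pi)" .
    have n1: "norm (complex_of_real (L / d - 1) * E1) \<le> 2 * norm a / L"
    proof -
      have B: "L / d - 1 = (L - d) / d" using dpos by (simp add: field_simps)
      have "norm (complex_of_real (L / d - 1) * E1) = \<bar>L / d - 1\<bar>"
        unfolding E1_def norm_mult norm_of_real norm_exp_i_times by simp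
      also have "\<dots> = \<bar>L - d\<bar> / d" unfolding B using dpos by simp
      also have "\<dots> \<le> norm a / (L / 2)"
        using est(1,2) dpos Lpos by (intro frac_le) auto
      also have "\<dots> = 2 * norm a / L" by simp
      finally show ?thesis .
    qed
    have n2: "norm (E1 - E2) \<le> \<bar>k\<bar> * (norm a)^2 / L"
    proof -
      have "norm (E1 - E2) \<le> \<bar>k * (d - L) - (- k * s)\<bar>" unfolding E1_def E2_def by (rule exp_i_diff_le)
      also have "\<dots> = \<bar>k\<bar> * \<bar>d - (L - s)\<bar>" by (simp add: abs_mult[symmetric] algebra_simps)
      also have "\<dots> \<le> \<bar>k\<bar> * ((norm a)^2 / L)" using est(3) unfolding s_def by (intro mult_left_mono) auto
      finally show ?thesis by simp
    qed
    have "norm ((complex_of_real (L / d - 1) * E1 + (E1 - E2)) / complex_of_real (4*pi))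
        \<le> (2 * norm a / L + \<bar>k\<bar> * (norm a)^2 / L) / (4 * pi)"
    proof -
      have t: "norm (complex_of_real (L / d - 1) * E1 + (E1 - E2)) \<le> 2 * norm a / L + \<bar>k\<bar> * (norm a)^2 / L"
        using n1 n2 norm_triangle_ineq[of "complex_of_real (L / d - 1) * E1" "E1 - E2"] by linarith
      have p4: "(4*pi::real) > 0" by simp
      show ?thesis unfolding norm_divide norm_of_real abs_of_pos[OF p4] using t p4 by (intro divide_right_mono) auto
    qed
    also have "\<dots> = (2 * norm a + \<bar>k\<bar> * (norm a)^2) / (4*pi) / L" using Lpos by (simp add: field_simps)
    finally show ?thesis unfolding eq .
  qed
qed (auto intro!: add_nonneg_pos add_nonneg_nonneg mult_nonneg_nonneg divide_nonneg_pos)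


definition dG :: "real \<Rightarrow> real \<Rightarrow> complex" where
  "dG k r = exp (\<i> * complex_of_real (k*r)) * (\<i> * complex_of_real (k*r) - 1) / complex_of_real (4*pi*r^2)"

lemma deriv_norm_line:
  fixes v :: "real^3"
  assumes "v \<noteq> 0"
  shows "((\<lambda>s. norm (v + s *\<^sub>R axis m 1)) has_real_derivative (v$m / norm v)) (at 0)"
proof -
  have 1: "((\<lambda>s. v + s *\<^sub>R axis m 1) has_derivative (\<lambda>h. h *\<^sub>R axis m 1)) (at 0)"
    by (auto intro!: derivative_eq_intros)
  have 2: "(norm has_derivative (\<lambda>h. inner h (sgn v))) (at (v + 0 *\<^sub>R axis m 1))"
    using has_derivative_norm[OF assms] by simp
  have "((\<lambda>s. norm (v + s *\<^sub>R axis m 1)) has_derivative (\<lambda>h. inner (h *\<^sub>R axis m 1) (sgn v))) (at 0)"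
    using has_derivative_compose[OF 1 2] by (simp add: o_def)
  moreover have "(\<lambda>h. inner (h *\<^sub>R axis m 1) (sgn v)) = (*) (v$m / norm v)"
  proof
    fix h
    have ax: "inner (axis m 1) w = w$m" for w :: "real^3"
      unfolding inner_commute[of "axis m 1" w] inner_axis by simp
    show "inner (h *\<^sub>R axis m 1) (sgn v) = (v$m / norm v) * h"
      by (simp add: ax sgn_div_norm field_simps)
  qed
  ultimately show ?thesis unfolding has_field_derivative_def by simp
qed

lemma aux_H: "(P::complex) \<noteq> 0 \<Longrightarrow> R \<noteq> 0 \<Longrightarrow>
  (E * (0 * R + 1 * (\<i> * K)) * (P * R) - E * (0 * R + 1 * P)) / (P * R * (P * R))
  = E * (\<i> * (K * R) - 1) / (P * R^2)"
  by (simp add: field_simps power2_eq_square)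

lemma H_deriv:
  assumes "r > 0"
  shows "((\<lambda>z. exp (\<i> * complex_of_real k * z) / (complex_of_real (4*pi) * z)) has_field_derivative dG k r)
          (at (complex_of_real r))"
proof -
  have r0: "complex_of_real r \<noteq> 0" using assms by simp
  show ?thesis
    apply (rule derivative_eq_intros refl | simp add: r0)+
    unfolding dG_def of_real_mult of_real_power using assms
    apply (simp_all only: mult.assoc)
    apply (auto simp: field_simps power2_eq_square)
    done
qed

lemma grad_G0:
  assumes "y \<noteq> a"
  shows "grad (G0 c0 \<omega> y) a = (\<chi> m. dG (\<omega>/c0) (dist y a) * complex_of_real ((a - y)$m / dist y a))"
proof -
  define k where "k = \<omega>/c0"
  define v where "v = a - y"
  have v0: "v \<noteq> 0" using assms unfolding v_def by simp
  have nv: "norm v = dist y a" unfolding v_def by (simp add: dist_norm norm_minus_commute)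
  define H where "H z = exp (\<i> * complex_of_real k * z) / (complex_of_real (4*pi) * z)" for z
  show ?thesis
  unfolding grad_def vec_eq_iff
  proof (intro allI)
    fix m :: 3
    define r where "r s = norm (v + s *\<^sub>R axis m 1)" for s
    have eqf: "(\<lambda>s. G0 c0 \<omega> y (a + s *\<^sub>R axis m 1)) = H \<circ> (\<lambda>s. complex_of_real (r s))"
    proof
      fix s
      have "dist y (a + s *\<^sub>R axis m 1) = r s" unfolding r_def v_def dist_norm
        by (metis (no_types, lifting) add.commute add_diff_eq diff_add_eq_diff_diff_swap norm_minus_commute)
      then show "G0 c0 \<omega> y (a + s *\<^sub>R axis m 1) = (H \<circ> (\<lambda>s. complex_of_real (r s))) s"
        unfolding G0_def H_def k_def o_def by (simp add: mult.assoc)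
    qed
    have d1: "((\<lambda>s. complex_of_real (r s)) has_vector_derivative complex_of_real (v$m / norm v)) (at 0)"
      unfolding r_def by (intro has_vector_derivative_of_real deriv_norm_line v0)
    have r0: "r 0 = norm v" unfolding r_def by simp
    have d2: "(H has_field_derivative dG k (norm v)) (at (complex_of_real (r 0)))"
      unfolding r0 H_def using v0 by (intro H_deriv) simp
    have "((\<lambda>s. G0 c0 \<omega> y (a + s *\<^sub>R axis m 1)) has_vector_derivative
           (complex_of_real (v$m / norm v) * dG k (norm v))) (at 0)"
      unfolding eqf by (rule field_vector_diff_chain_at[OF d1 d2])
    then have "vector_derivative (\<lambda>s. G0 c0 \<omega> y (a + s *\<^sub>R axis m 1)) (at 0)
        = complex_of_real (v$m / norm v) * dG k (norm v)"
      by (rule vector_derivative_at)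
    then show "(\<chi> k. vector_derivative (\<lambda>s. G0 c0 \<omega> y (a + s *\<^sub>R axis k 1)) (at 0)) $ m =
         (\<chi> m. dG (\<omega> / c0) (dist y a) * complex_of_real ((a - y) $ m / dist y a)) $ m"
      unfolding nv[symmetric] by (simp add: k_def v_def mult.commute)
  qed
qed

lemma rad_cong:
  assumes "rad k u U" "\<And>y. Lc \<le> norm y \<Longrightarrow> v y = u y"
  shows "rad k v U"
proof -
  obtain L0 C B where 1: "continuous_on UNIV U" "0 < L0" "0 \<le> C" "0 \<le> B" "continuous_on {y. L0 \<le> norm y} u"
    "\<And>y. norm y = 1 \<Longrightarrow> norm (U y) \<le> B"
    "\<And>L y. L0 \<le> L \<Longrightarrow> norm y = 1 \<Longrightarrow>
        norm (complex_of_real L * exp (- \<i> * complex_of_real (k * L)) * u (L *\<^sub>R y) - U y) \<le> C / L"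
    using radE[OF assms(1)] by blast
  show ?thesis
  proof (rule radI[where Lz="max L0 Lc" and Cc=C and Bb=B])
    show "continuous_on {y. max L0 Lc \<le> norm y} v"
      by (rule continuous_on_eq[OF continuous_on_subset[OF 1(5)]]) (auto simp: assms(2))
    show "norm (complex_of_real L * exp (- \<i> * complex_of_real (k * L)) * v (L *\<^sub>R y) - U y) \<le> C / L"
      if "max L0 Lc \<le> L" "norm y = 1" for L y
    proof -
      have "L > 0" using that 1(2) by linarith
      then have "v (L *\<^sub>R y) = u (L *\<^sub>R y)" using that by (intro assms(2)) simp
      then show ?thesis using 1(7)[of L y] that by simp
    qed
  qed (use 1(1-4,6) in auto)
qed

lemma dG_split:
  assumes "r \<noteq> 0"
  shows "dG k r = exp (\<i> * complex_of_real (k * r)) / complex_of_real (4 * pi * r) * (\<i> * complex_of_real k - 1 / complex_of_real r)"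
  unfolding dG_def using assms by (simp add: field_simps power2_eq_square)

lemma rad_grad:
  fixes a :: "real^3" and k c0 \<omega> :: real
  defines "k \<equiv> \<omega> / c0"
  shows "rad k (\<lambda>y. grad (G0 c0 \<omega> y) a $ m)
      (\<lambda>y. (- \<i> * complex_of_real k * complex_of_real (y$m)) * (exp (- \<i> * complex_of_real (k * inner a y)) / complex_of_real (4*pi)))"
proof -
  define f where "f y = (\<i> * complex_of_real k - 1 / complex_of_real (dist y a)) * complex_of_real ((a - y)$m / dist y a)" for y
  define Lf where "Lf = 2 * norm a + 1"
  have Lf0: "0 < Lf" unfolding Lf_def using norm_ge_zero[of a] by linarith
  have far: "dist y a \<noteq> 0" if "Lf \<le> norm y" for y
  proof
    assume "dist y a = 0"
    then have "a = y" by simp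
    then show False using that norm_ge_zero[of a] norm_ge_zero[of y] unfolding Lf_def by simp
  qed
  have r1: "rad k (\<lambda>y. f y * G0 c0 \<omega> a y)
      (\<lambda>y. (- \<i> * complex_of_real k * complex_of_real (y$m)) * (exp (- \<i> * complex_of_real (k * inner a y)) / complex_of_real (4*pi)))"
  proof (rule rad_mult[where Lf=Lf and Cf="4 * \<bar>k\<bar> * norm a + 2" and Bf="\<bar>k\<bar>"])
    show "rad k (G0 c0 \<omega> a) (\<lambda>y. exp (- \<i> * complex_of_real (k * inner a y)) / complex_of_real (4 * pi))"
      unfolding k_def by (rule rad_G0)
    show "continuous_on UNIV (\<lambda>y. - \<i> * complex_of_real k * complex_of_real (y $ m))"
      by (intro continuous_intros)
    show "continuous_on {y. Lf \<le> norm y} f"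
      unfolding f_def using far by (intro continuous_intros) auto
    show "norm (- \<i> * complex_of_real k * complex_of_real (y $ m)) \<le> \<bar>k\<bar>" if "norm y = 1" for y
    proof -
      have "\<bar>y$m\<bar> \<le> 1" using component_le_norm_cart[of y m] that by simp
      then show ?thesis by (simp add: norm_mult mult_left_le)
    qed
    show "norm (f (L *\<^sub>R y) - - \<i> * complex_of_real k * complex_of_real (y $ m)) \<le> (4 * \<bar>k\<bar> * norm a + 2) / L"
      if L: "Lf \<le> L" and y: "norm y = 1" for L y
    proof -
      define d where "d = norm (L *\<^sub>R y - a)"
      have Lpos: "L > 0" using L Lf0 by linarith
      note est = dist_est[OF y L[unfolded Lf_def], folded d_def]
      have dpos: "d > 0" using est(2) Lpos by linarith
      have dd: "dist (L *\<^sub>R y) a = d" unfolding d_def dist_norm ..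
      define q where "q = (a - L *\<^sub>R y)$m / d"
      have fq: "f (L *\<^sub>R y) = (\<i> * complex_of_real k - 1 / complex_of_real d) * complex_of_real q"
        unfolding f_def dd q_def ..
      have q1: "\<bar>q\<bar> \<le> 1"
      proof -
        have "\<bar>(a - L *\<^sub>R y)$m\<bar> \<le> norm (a - L *\<^sub>R y)" by (rule component_le_norm_cart)
        also have "\<dots> = d" unfolding d_def by (simp add: norm_minus_commute)
        finally show ?thesis unfolding q_def using dpos by (simp add: abs_div)
      qed
      have q2: "\<bar>q + y$m\<bar> \<le> 4 * norm a / L"
      proof -
        have "q + y$m = (a$m + (d - L) * y$m) / d" unfolding q_def using dpos by (simp add: field_simps)
        moreover have "\<bar>a$m + (d - L) * y$m\<bar> \<le> 2 * norm a"
        proof -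
          have "\<bar>a$m\<bar> \<le> norm a" by (rule component_le_norm_cart)
          moreover have "\<bar>y$m\<bar> \<le> 1" using component_le_norm_cart[of y m] y by simp
          moreover have "\<bar>(d - L) * y$m\<bar> = \<bar>d - L\<bar> * \<bar>y$m\<bar>" by (simp add: abs_mult)
          moreover have "\<bar>d - L\<bar> \<le> norm a" using est(1) by simp
          ultimately have "\<bar>(d - L) * y$m\<bar> \<le> norm a"
            by (metis mult_left_le abs_ge_zero order_trans)
          then show ?thesis using \<open>\<bar>a$m\<bar> \<le> norm a\<close> by linarith
        qed
        ultimately have "\<bar>q + y$m\<bar> \<le> 2 * norm a / d" using dpos by (simp add: abs_div divide_right_mono)
        also have "\<dots> \<le> 2 * norm a / (L / 2)" using est(2) Lpos by (intro divide_left_mono) auto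
        also have "\<dots> = 4 * norm a / L" by simp
        finally show ?thesis .
      qed
      have "f (L *\<^sub>R y) - - \<i> * complex_of_real k * complex_of_real (y $ m)
          = \<i> * complex_of_real k * complex_of_real (q + y$m) - complex_of_real (q / d)"
        unfolding fq by (simp add: field_simps)
      also have "norm \<dots> \<le> \<bar>k\<bar> * (4 * norm a / L) + 2 / L"
      proof -
        have "norm (\<i> * complex_of_real k * complex_of_real (q + y$m)) \<le> \<bar>k\<bar> * (4 * norm a / L)"
          unfolding norm_mult norm_of_real using q2 by (simp add: mult_left_mono del: times_divide_eq_right)
        moreover have "norm (complex_of_real (q / d)) \<le> 2 / L"
        proof -
          have "\<bar>q / d\<bar> = \<bar>q\<bar> / d" using dpos by (simp add: abs_div)
          also have "\<dots> \<le> 1 / d" using q1 dpos by (simp add: divide_right_mono)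
          also have "\<dots> \<le> 1 / (L / 2)" using est(2) Lpos by (intro divide_left_mono) auto
          finally show ?thesis unfolding norm_of_real by simp
        qed
        ultimately show ?thesis using norm_triangle_ineq4 by (smt (verit))
      qed
      also have "\<dots> = (4 * \<bar>k\<bar> * norm a + 2) / L" using Lpos by (simp add: field_simps)
      finally show ?thesis .
    qed
  qed (use Lf0 in auto)
  show ?thesis
  proof (rule rad_cong[OF r1, where Lc=Lf])
    fix y :: "real^3" assume y: "Lf \<le> norm y"
    have ne: "y \<noteq> a" using far[OF y] by auto
    have da: "dist a y = dist y a" by (rule dist_commute)
    show "grad (G0 c0 \<omega> y) a $ m = f y * G0 c0 \<omega> a y"
      unfolding grad_G0[OF ne] f_def G0_def da k_def[symmetric] dG_split[OF far[OF y]]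
      by (simp add: field_simps)
  qed
qed


lemma div_zero:
  fixes Ha Hb ha hb :: "real \<Rightarrow> real \<Rightarrow> complex"
  assumes d1: "\<And>t p. ((\<lambda>t. Ha t p) has_vector_derivative ha t p) (at t)"
      and d2: "\<And>t p. ((\<lambda>p. Hb t p) has_vector_derivative hb t p) (at p)"
      and c1: "continuous_on BX (\<lambda>q. ha (fst q) (snd q))"
      and c2: "continuous_on BX (\<lambda>q. hb (fst q) (snd q))"
      and b1: "\<And>p. Ha pi p = Ha 0 p" and b2: "\<And>t. Hb t (2*pi) = Hb t 0"
  shows "integral BX (\<lambda>q. ha (fst q) (snd q) + hb (fst q) (snd q)) = 0"
proof -
  have i1: "(\<lambda>q. ha (fst q) (snd q)) integrable_on BX" unfolding BX_def
    by (rule integrable_continuous) (use c1 in \<open>simp add: BX_def\<close>)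
  have i2: "(\<lambda>q. hb (fst q) (snd q)) integrable_on BX" unfolding BX_def
    by (rule integrable_continuous) (use c2 in \<open>simp add: BX_def\<close>)
  have "integral BX (\<lambda>q. ha (fst q) (snd q)) = integral (cbox 0 pi) (\<lambda>t. integral (cbox 0 (2*pi)) (\<lambda>p. ha t p))"
    unfolding BX_def by (subst integral_prod_continuous) (use c1 in \<open>auto simp: BX_def\<close>)
  also have "\<dots> = integral (cbox 0 (2*pi)) (\<lambda>p. integral (cbox 0 pi) (\<lambda>t. ha t p))"
    by (rule integral_swap_continuous) (use c1 in \<open>auto simp: BX_def case_prod_beta\<close>)
  also have "\<dots> = integral (cbox 0 (2*pi)) (\<lambda>p. 0)"
  proof (rule integral_cong)
    fix p
    have "((\<lambda>t. ha t p) has_integral (Ha pi p - Ha 0 p)) {0..pi}"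
      by (rule fundamental_theorem_of_calculus) (auto intro: has_vector_derivative_at_within d1)
    then show "integral (cbox 0 pi) (\<lambda>t. ha t p) = 0" using b1 by (simp add: cbox_interval integral_unique)
  qed
  finally have z1: "integral BX (\<lambda>q. ha (fst q) (snd q)) = 0" by simp
  have "integral BX (\<lambda>q. hb (fst q) (snd q)) = integral (cbox 0 pi) (\<lambda>t. integral (cbox 0 (2*pi)) (\<lambda>p. hb t p))"
    unfolding BX_def by (subst integral_prod_continuous) (use c2 in \<open>auto simp: BX_def\<close>)
  also have "\<dots> = integral (cbox 0 pi) (\<lambda>t. 0)"
  proof (rule integral_cong)
    fix t
    have "((\<lambda>p. hb t p) has_integral (Hb t (2*pi) - Hb t 0)) {0..2*pi}"
      by (rule fundamental_theorem_of_calculus) (auto intro: has_vector_derivative_at_within d2)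
    then show "integral (cbox 0 (2*pi)) (\<lambda>p. hb t p) = 0" using b2 by (simp add: cbox_interval integral_unique)
  qed
  finally have z2: "integral BX (\<lambda>q. hb (fst q) (snd q)) = 0" by simp
  show ?thesis using integral_add[OF i1 i2] z1 z2 by simp
qed


definition SS :: "real \<Rightarrow> real \<Rightarrow> real \<Rightarrow> complex" where
  "SS c1 c2 c3 = integral BX (\<lambda>q. complex_of_real (sin (fst q)) *
      exp (\<i> * complex_of_real (c1 * sin (fst q) * cos (snd q) + c2 * sin (fst q) * sin (snd q) + c3 * cos (fst q))))"

lemma vd_cexp:
  assumes "(e has_real_derivative e') (at x)"
  shows "((\<lambda>x. exp (\<i> * complex_of_real (e x))) has_vector_derivative (\<i> * complex_of_real e' * exp (\<i> * complex_of_real (e x)))) (at x)"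
proof -
  have 1: "((\<lambda>x. complex_of_real (e x)) has_vector_derivative complex_of_real e') (at x)"
    by (rule has_vector_derivative_of_real[OF assms])
  have 2: "((\<lambda>z. exp (\<i> * z)) has_field_derivative (\<i> * exp (\<i> * complex_of_real (e x)))) (at (complex_of_real (e x)))"
    by (auto intro!: derivative_eq_intros)
  show ?thesis using field_vector_diff_chain_at[OF 1 2] by (simp add: o_def mult.assoc mult.left_commute)
qed

lemma SS_deriv:
  fixes K1 K2 K3 A1 A2 A3 B1 B2 B3 :: real
  defines "d \<equiv> \<lambda>K A B (a::real). K + A * cos a + B * sin a"
  defines "d' \<equiv> \<lambda>A B (a::real). - A * sin a + B * cos a"
  defines "e \<equiv> \<lambda>a q. d K1 A1 B1 a * sin (fst q) * cos (snd q) + d K2 A2 B2 a * sin (fst q) * sin (snd q) + d K3 A3 B3 a * cos (fst q)"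
  defines "ea \<equiv> \<lambda>a q. d' A1 B1 a * sin (fst q) * cos (snd q) + d' A2 B2 a * sin (fst q) * sin (snd q) + d' A3 B3 a * cos (fst q)"
  shows "((\<lambda>a. SS (d K1 A1 B1 a) (d K2 A2 B2 a) (d K3 A3 B3 a)) has_vector_derivative
     integral BX (\<lambda>q. complex_of_real (sin (fst q)) * (\<i> * complex_of_real (ea a0 q) * exp (\<i> * complex_of_real (e a0 q))))) (at a0)"
proof -
  have "((\<lambda>a. integral (cbox (0,0) (pi,2*pi)) (\<lambda>q. complex_of_real (sin (fst q)) * exp (\<i> * complex_of_real (e a q)))) has_vector_derivative
     integral (cbox (0,0) (pi,2*pi)) (\<lambda>q. complex_of_real (sin (fst q)) * (\<i> * complex_of_real (ea a0 q) * exp (\<i> * complex_of_real (e a0 q))))) (at a0 within UNIV)"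
  proof (rule leibniz_rule_vector_derivative)
    fix a :: real and q :: "real \<times> real"
    have "((\<lambda>a. e a q) has_real_derivative ea a q) (at a)"
      unfolding e_def ea_def d_def d'_def by (auto intro!: derivative_eq_intros simp: algebra_simps)
    then show "((\<lambda>a. complex_of_real (sin (fst q)) * exp (\<i> * complex_of_real (e a q))) has_vector_derivative
         complex_of_real (sin (fst q)) * (\<i> * complex_of_real (ea a q) * exp (\<i> * complex_of_real (e a q)))) (at a within UNIV)"
      by (intro has_vector_derivative_mult_right vd_cexp)
  next
    fix a :: real
    show "(\<lambda>q. complex_of_real (sin (fst q)) * exp (\<i> * complex_of_real (e a q))) integrable_on cbox (0, 0) (pi, 2 * pi)"
      unfolding e_def d_def by (intro integrable_continuous continuous_intros)
  next
    show "continuous_on (UNIV \<times> cbox (0, 0) (pi, 2 * pi))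
      (\<lambda>(a, q). complex_of_real (sin (fst q)) * (\<i> * complex_of_real (ea a q) * exp (\<i> * complex_of_real (e a q))))"
      unfolding e_def ea_def d_def d'_def case_prod_beta by (intro continuous_intros)
  qed auto
  then show ?thesis unfolding SS_def BX_def e_def by simp
qed


lemma vd_rmul:
  assumes "(r has_real_derivative r') (at x)" "(g has_vector_derivative g') (at x)"
  shows "((\<lambda>x. complex_of_real (r x) * g x) has_vector_derivative
           (complex_of_real (r x) * g' + complex_of_real r' * g x)) (at x)"
  using has_vector_derivative_mult[OF has_vector_derivative_of_real[OF assms(1)] assms(2)] by simp

lemma Y_zero:
  fixes d1 c2 d3 :: real
  shows "integral BX (\<lambda>q. complex_of_real (sin (fst q)) *
     (\<i> * complex_of_real (- d3 * sin (fst q) * cos (snd q) + d1 * cos (fst q)) *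
      exp (\<i> * complex_of_real (d1 * sin (fst q) * cos (snd q) + c2 * sin (fst q) * sin (snd q) + d3 * cos (fst q))))) = 0"
proof -
  define e where "e t p = d1 * sin t * cos p + c2 * sin t * sin p + d3 * cos t" for t p
  define et where "et t p = d1 * cos t * cos p + c2 * cos t * sin p - d3 * sin t" for t p
  define ep where "ep t p = - d1 * sin t * sin p + c2 * sin t * cos p" for t p
  define E where "E t p = exp (\<i> * complex_of_real (e t p))" for t p
  define H1 where "H1 t p = complex_of_real (sin t * cos p) * E t p" for t p
  define h1 where "h1 t p = complex_of_real (sin t * cos p) * (\<i> * complex_of_real (et t p) * E t p)
     + complex_of_real (cos t * cos p) * E t p" for t p
  define H2 where "H2 t p = complex_of_real (- cos t * sin p) * E t p" for t p
  define h2 where "h2 t p = complex_of_real (- cos t * sin p) * (\<i> * complex_of_real (ep t p) * E t p)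
     + complex_of_real (- cos t * cos p) * E t p" for t p
  have z: "integral BX (\<lambda>q. h1 (fst q) (snd q) + h2 (fst q) (snd q)) = 0"
  proof (rule div_zero[where Ha=H1 and Hb=H2])
    fix t p
    show "((\<lambda>t. H1 t p) has_vector_derivative h1 t p) (at t)"
    proof -
      have a: "((\<lambda>t. sin t * cos p) has_real_derivative (cos t * cos p)) (at t)"
        by (auto intro!: derivative_eq_intros)
      have b: "((\<lambda>t. e t p) has_real_derivative et t p) (at t)"
        unfolding e_def et_def by (auto intro!: derivative_eq_intros simp: algebra_simps)
      show ?thesis unfolding H1_def h1_def E_def by (rule vd_rmul[OF a vd_cexp[OF b]])
    qed
    show "((\<lambda>p. H2 t p) has_vector_derivative h2 t p) (at p)"
    proof -
      have a: "((\<lambda>p. - cos t * sin p) has_real_derivative (- cos t * cos p)) (at p)"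
        by (auto intro!: derivative_eq_intros)
      have b: "((\<lambda>p. e t p) has_real_derivative ep t p) (at p)"
        unfolding e_def ep_def by (auto intro!: derivative_eq_intros simp: algebra_simps)
      show ?thesis unfolding H2_def h2_def E_def by (rule vd_rmul[OF a vd_cexp[OF b]])
    qed
  next
    show "continuous_on BX (\<lambda>q. h1 (fst q) (snd q))"
      unfolding h1_def E_def e_def et_def by (intro continuous_intros)
    show "continuous_on BX (\<lambda>q. h2 (fst q) (snd q))"
      unfolding h2_def E_def e_def ep_def by (intro continuous_intros)
  qed (simp_all add: H1_def H2_def)
  have pt: "complex_of_real (sin t) * (\<i> * complex_of_real (- d3 * sin t * cos p + d1 * cos t) * E t p)
      = h1 t p + h2 t p" for t p
  proof -
    have cs: "(cos p)^2 + (sin p)^2 = 1" by simp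
    have r: "sin t * (- d3 * sin t * cos p + d1 * cos t) = sin t * cos p * et t p - cos t * sin p * ep t p"
    proof -
      have "sin t * cos p * et t p - cos t * sin p * ep t p
          = d1 * sin t * cos t - d3 * (sin t)^2 * cos p"
        unfolding et_def ep_def using cs by algebra
      also have "\<dots> = sin t * (- d3 * sin t * cos p + d1 * cos t)" by (simp add: algebra_simps power2_eq_square)
      finally show ?thesis by simp
    qed
    have "h1 t p + h2 t p = \<i> * E t p * complex_of_real (sin t * cos p * et t p - cos t * sin p * ep t p)"
      unfolding h1_def h2_def by (simp add: algebra_simps)
    also have "\<dots> = \<i> * E t p * complex_of_real (sin t * (- d3 * sin t * cos p + d1 * cos t))" unfolding r ..
    finally show ?thesis by (simp add: algebra_simps)
  qed
  show ?thesis
    using z unfolding pt[symmetric] E_def e_def by simp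
qed

lemma Z_zero:
  fixes d1 d2 c3 :: real
  shows "integral BX (\<lambda>q. complex_of_real (sin (fst q)) *
     (\<i> * complex_of_real (- d2 * sin (fst q) * cos (snd q) + d1 * sin (fst q) * sin (snd q)) *
      exp (\<i> * complex_of_real (d1 * sin (fst q) * cos (snd q) + d2 * sin (fst q) * sin (snd q) + c3 * cos (fst q))))) = 0"
proof -
  define e where "e t p = d1 * sin t * cos p + d2 * sin t * sin p + c3 * cos t" for t p
  define ep where "ep t p = - d1 * sin t * sin p + d2 * sin t * cos p" for t p
  define E where "E t p = exp (\<i> * complex_of_real (e t p))" for t p
  define H2 where "H2 t p = complex_of_real (- sin t) * E t p" for t p
  define h2 where "h2 t p = complex_of_real (- sin t) * (\<i> * complex_of_real (ep t p) * E t p)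
     + complex_of_real 0 * E t p" for t p
  have z: "integral BX (\<lambda>q. (\<lambda>t p. 0) (fst q) (snd q) + h2 (fst q) (snd q)) = 0"
  proof (rule div_zero[where Ha="\<lambda>t p. 0" and Hb=H2])
    fix t p
    show "((\<lambda>p. H2 t p) has_vector_derivative h2 t p) (at p)"
    proof -
      have a: "((\<lambda>p. - sin t) has_real_derivative 0) (at p)"
        by (auto intro!: derivative_eq_intros)
      have b: "((\<lambda>p. e t p) has_real_derivative ep t p) (at p)"
        unfolding e_def ep_def by (auto intro!: derivative_eq_intros simp: algebra_simps)
      show ?thesis unfolding H2_def h2_def E_def by (rule vd_rmul[OF a vd_cexp[OF b]])
    qed
  next
    show "continuous_on BX (\<lambda>q. h2 (fst q) (snd q))"
      unfolding h2_def E_def e_def ep_def by (intro continuous_intros)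
    show "H2 t (2 * pi) = H2 t 0" for t unfolding H2_def E_def e_def by simp
  qed auto
  have pt: "complex_of_real (sin t) * (\<i> * complex_of_real (- d2 * sin t * cos p + d1 * sin t * sin p) * E t p)
      = h2 t p" for t p
    unfolding h2_def ep_def by (simp add: algebra_simps)
  show ?thesis
    using z unfolding pt[symmetric] E_def e_def by simp
qed


lemma zero_deriv_const:
  fixes f :: "real \<Rightarrow> complex"
  assumes "\<And>x. (f has_vector_derivative 0) (at x)"
  shows "f a = f 0"
proof -
  have "\<exists>c. \<forall>x\<in>UNIV. f x = c"
    by (rule has_derivative_zero_constant) (use assms in \<open>auto simp: has_vector_derivative_def\<close>)
  then show ?thesis by auto
qed

lemma rotY: "SS (c1 * cos a - c3 * sin a) c2 (c1 * sin a + c3 * cos a) = SS c1 c2 c3"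
proof -
  define F where "F a = SS (c1 * cos a - c3 * sin a) c2 (c1 * sin a + c3 * cos a)" for a
  have "(F has_vector_derivative 0) (at a0)" for a0
  proof -
    have fe: "F = (\<lambda>a. SS (0 + c1 * cos a + (- c3) * sin a) (c2 + 0 * cos a + 0 * sin a) (0 + c3 * cos a + c1 * sin a))"
      unfolding F_def by (rule ext) (simp add: algebra_simps)
    define d1 where "d1 = c1 * cos a0 - c3 * sin a0"
    define d3 where "d3 = c1 * sin a0 + c3 * cos a0"
    have "integral BX (\<lambda>q. complex_of_real (sin (fst q)) *
        (\<i> * complex_of_real ((- c1 * sin a0 + - c3 * cos a0) * sin (fst q) * cos (snd q) + (- 0 * sin a0 + 0 * cos a0) * sin (fst q) * sin (snd q) + (- c3 * sin a0 + c1 * cos a0) * cos (fst q)) *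
         exp (\<i> * complex_of_real ((0 + c1 * cos a0 + - c3 * sin a0) * sin (fst q) * cos (snd q) + (c2 + 0 * cos a0 + 0 * sin a0) * sin (fst q) * sin (snd q) + (0 + c3 * cos a0 + c1 * sin a0) * cos (fst q)))))
      = integral BX (\<lambda>q. complex_of_real (sin (fst q)) *
     (\<i> * complex_of_real (- d3 * sin (fst q) * cos (snd q) + d1 * cos (fst q)) *
      exp (\<i> * complex_of_real (d1 * sin (fst q) * cos (snd q) + c2 * sin (fst q) * sin (snd q) + d3 * cos (fst q)))))"
    proof (rule integral_cong)
      fix q :: "real \<times> real"
      have "(- c1 * sin a0 + - c3 * cos a0) * sin (fst q) * cos (snd q) + (- 0 * sin a0 + 0 * cos a0) * sin (fst q) * sin (snd q) + (- c3 * sin a0 + c1 * cos a0) * cos (fst q)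
          = - d3 * sin (fst q) * cos (snd q) + d1 * cos (fst q)" unfolding d1_def d3_def by (simp add: algebra_simps)
      moreover have "(0 + c1 * cos a0 + - c3 * sin a0) * sin (fst q) * cos (snd q) + (c2 + 0 * cos a0 + 0 * sin a0) * sin (fst q) * sin (snd q) + (0 + c3 * cos a0 + c1 * sin a0) * cos (fst q)
          = d1 * sin (fst q) * cos (snd q) + c2 * sin (fst q) * sin (snd q) + d3 * cos (fst q)" unfolding d1_def d3_def by (simp add: algebra_simps)
      ultimately show "complex_of_real (sin (fst q)) *
        (\<i> * complex_of_real ((- c1 * sin a0 + - c3 * cos a0) * sin (fst q) * cos (snd q) + (- 0 * sin a0 + 0 * cos a0) * sin (fst q) * sin (snd q) + (- c3 * sin a0 + c1 * cos a0) * cos (fst q)) *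
         exp (\<i> * complex_of_real ((0 + c1 * cos a0 + - c3 * sin a0) * sin (fst q) * cos (snd q) + (c2 + 0 * cos a0 + 0 * sin a0) * sin (fst q) * sin (snd q) + (0 + c3 * cos a0 + c1 * sin a0) * cos (fst q))))
        = complex_of_real (sin (fst q)) *
     (\<i> * complex_of_real (- d3 * sin (fst q) * cos (snd q) + d1 * cos (fst q)) *
      exp (\<i> * complex_of_real (d1 * sin (fst q) * cos (snd q) + c2 * sin (fst q) * sin (snd q) + d3 * cos (fst q))))"
        by (simp only:)
    qed
    also have "\<dots> = 0" by (rule Y_zero)
    finally have z: "integral BX (\<lambda>q. complex_of_real (sin (fst q)) *
        (\<i> * complex_of_real ((- c1 * sin a0 + - c3 * cos a0) * sin (fst q) * cos (snd q) + (- 0 * sin a0 + 0 * cos a0) * sin (fst q) * sin (snd q) + (- c3 * sin a0 + c1 * cos a0) * cos (fst q)) *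
         exp (\<i> * complex_of_real ((0 + c1 * cos a0 + - c3 * sin a0) * sin (fst q) * cos (snd q) + (c2 + 0 * cos a0 + 0 * sin a0) * sin (fst q) * sin (snd q) + (0 + c3 * cos a0 + c1 * sin a0) * cos (fst q))))) = 0" .
    show ?thesis
      using SS_deriv[of 0 c1 "- c3" c2 0 0 0 c3 c1 a0] unfolding fe z .
  qed
  then have "F a = F 0" by (rule zero_deriv_const)
  then show ?thesis unfolding F_def by simp
qed


lemma rotZ: "SS (c1 * cos a - c2 * sin a) (c1 * sin a + c2 * cos a) c3 = SS c1 c2 c3"
proof -
  define F where "F a = SS (c1 * cos a - c2 * sin a) (c1 * sin a + c2 * cos a) c3" for a
  have "(F has_vector_derivative 0) (at a0)" for a0
  proof -
    have fe: "F = (\<lambda>a. SS (0 + c1 * cos a + (- c2) * sin a) (0 + c2 * cos a + c1 * sin a) (c3 + 0 * cos a + 0 * sin a))"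
      unfolding F_def by (rule ext) (simp add: algebra_simps)
    define d1 where "d1 = c1 * cos a0 - c2 * sin a0"
    define d2 where "d2 = c1 * sin a0 + c2 * cos a0"
    have "integral BX (\<lambda>q. complex_of_real (sin (fst q)) *
        (\<i> * complex_of_real ((- c1 * sin a0 + - c2 * cos a0) * sin (fst q) * cos (snd q) + (- c2 * sin a0 + c1 * cos a0) * sin (fst q) * sin (snd q) + (- 0 * sin a0 + 0 * cos a0) * cos (fst q)) *
         exp (\<i> * complex_of_real ((0 + c1 * cos a0 + - c2 * sin a0) * sin (fst q) * cos (snd q) + (0 + c2 * cos a0 + c1 * sin a0) * sin (fst q) * sin (snd q) + (c3 + 0 * cos a0 + 0 * sin a0) * cos (fst q)))))
      = integral BX (\<lambda>q. complex_of_real (sin (fst q)) *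
     (\<i> * complex_of_real (- d2 * sin (fst q) * cos (snd q) + d1 * sin (fst q) * sin (snd q)) *
      exp (\<i> * complex_of_real (d1 * sin (fst q) * cos (snd q) + d2 * sin (fst q) * sin (snd q) + c3 * cos (fst q)))))"
    proof (rule integral_cong)
      fix q :: "real \<times> real"
      have "(- c1 * sin a0 + - c2 * cos a0) * sin (fst q) * cos (snd q) + (- c2 * sin a0 + c1 * cos a0) * sin (fst q) * sin (snd q) + (- 0 * sin a0 + 0 * cos a0) * cos (fst q)
          = - d2 * sin (fst q) * cos (snd q) + d1 * sin (fst q) * sin (snd q)" unfolding d1_def d2_def by (simp add: algebra_simps)
      moreover have "(0 + c1 * cos a0 + - c2 * sin a0) * sin (fst q) * cos (snd q) + (0 + c2 * cos a0 + c1 * sin a0) * sin (fst q) * sin (snd q) + (c3 + 0 * cos a0 + 0 * sin a0) * cos (fst q)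
          = d1 * sin (fst q) * cos (snd q) + d2 * sin (fst q) * sin (snd q) + c3 * cos (fst q)" unfolding d1_def d2_def by (simp add: algebra_simps)
      ultimately show "complex_of_real (sin (fst q)) *
        (\<i> * complex_of_real ((- c1 * sin a0 + - c2 * cos a0) * sin (fst q) * cos (snd q) + (- c2 * sin a0 + c1 * cos a0) * sin (fst q) * sin (snd q) + (- 0 * sin a0 + 0 * cos a0) * cos (fst q)) *
         exp (\<i> * complex_of_real ((0 + c1 * cos a0 + - c2 * sin a0) * sin (fst q) * cos (snd q) + (0 + c2 * cos a0 + c1 * sin a0) * sin (fst q) * sin (snd q) + (c3 + 0 * cos a0 + 0 * sin a0) * cos (fst q))))
        = complex_of_real (sin (fst q)) *
     (\<i> * complex_of_real (- d2 * sin (fst q) * cos (snd q) + d1 * sin (fst q) * sin (snd q)) *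
      exp (\<i> * complex_of_real (d1 * sin (fst q) * cos (snd q) + d2 * sin (fst q) * sin (snd q) + c3 * cos (fst q))))"
        by (simp only:)
    qed
    also have "\<dots> = 0" by (rule Z_zero)
    finally have z: "integral BX (\<lambda>q. complex_of_real (sin (fst q)) *
        (\<i> * complex_of_real ((- c1 * sin a0 + - c2 * cos a0) * sin (fst q) * cos (snd q) + (- c2 * sin a0 + c1 * cos a0) * sin (fst q) * sin (snd q) + (- 0 * sin a0 + 0 * cos a0) * cos (fst q)) *
         exp (\<i> * complex_of_real ((0 + c1 * cos a0 + - c2 * sin a0) * sin (fst q) * cos (snd q) + (0 + c2 * cos a0 + c1 * sin a0) * sin (fst q) * sin (snd q) + (c3 + 0 * cos a0 + 0 * sin a0) * cos (fst q))))) = 0" .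
    show ?thesis
      using SS_deriv[of 0 c1 "- c2" 0 c2 c1 c3 0 0 a0] unfolding fe z .
  qed
  then have "F a = F 0" by (rule zero_deriv_const)
  then show ?thesis unfolding F_def by simp
qed


lemma SS_axis:
  assumes r: "r \<noteq> 0"
  shows "SS 0 0 r = complex_of_real (4 * pi * sin r / r)"
proof -
  define g where "g t = complex_of_real (sin t) * exp (\<i> * complex_of_real (r * cos t))" for t
  have cg: "continuous_on S g" for S unfolding g_def by (intro continuous_intros)
  have "SS 0 0 r = integral (cbox (0,0) (pi, 2*pi)) (\<lambda>q. g (fst q))"
    unfolding SS_def BX_def g_def by simp
  also have "\<dots> = integral (cbox 0 pi) (\<lambda>t. integral (cbox 0 (2*pi)) (\<lambda>p. g t))"
    by (subst integral_prod_continuous) (auto intro!: continuous_intros continuous_on_compose2[OF cg[of UNIV]])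
  also have "\<dots> = integral {0..pi} (\<lambda>t. complex_of_real (2*pi) * g t)"
    by (simp add: cbox_interval scaleR_conv_of_real)
  also have "\<dots> = complex_of_real (2*pi) * integral {0..pi} g"
    by (rule integral_mult_right)
  also have "integral {0..pi} g = complex_of_real (2 * sin r / r)"
  proof -
    define F where "F t = \<i> / complex_of_real r * exp (\<i> * complex_of_real (r * cos t))" for t
    have "(g has_integral (F pi - F 0)) {0..pi}"
    proof (rule fundamental_theorem_of_calculus)
      fix t assume "t \<in> {0..pi}"
      have d: "((\<lambda>t. r * cos t) has_real_derivative (- r * sin t)) (at t)"
        by (auto intro!: derivative_eq_intros)
      have "(F has_vector_derivative (\<i> / complex_of_real r * (\<i> * complex_of_real (- r * sin t) * exp (\<i> * complex_of_real (r * cos t))))) (at t)"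
        unfolding F_def by (intro has_vector_derivative_mult_right vd_cexp d)
      moreover have "\<i> / complex_of_real r * (\<i> * complex_of_real (- r * sin t) * exp (\<i> * complex_of_real (r * cos t))) = g t"
        unfolding g_def using r by (simp add: field_simps)
      ultimately show "(F has_vector_derivative g t) (at t within {0..pi})"
        by (simp add: has_vector_derivative_at_within)
    qed simp
    moreover have "F pi - F 0 = complex_of_real (2 * sin r / r)"
    proof -
      have "F pi - F 0 = \<i> / complex_of_real r * (exp (- (\<i> * complex_of_real r)) - exp (\<i> * complex_of_real r))"
        unfolding F_def by (simp add: algebra_simps)
      also have "exp (- (\<i> * complex_of_real r)) - exp (\<i> * complex_of_real r) = - 2 * \<i> * complex_of_real (sin r)"
        by (simp add: complex_eq_iff Re_exp Im_exp)
      finally show ?thesis using r by (simp add: field_simps)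
    qed
    ultimately show ?thesis by (simp add: integral_unique)
  qed
  finally show ?thesis by simp
qed

lemma SS_rot_z: "SS c1 c2 c3 = SS (sqrt (c1^2 + c2^2)) 0 c3"
proof (cases "sqrt (c1^2 + c2^2) = 0")
  case True
  then have "c1 = 0" "c2 = 0" by (auto simp: sum_power2_eq_zero_iff)
  then show ?thesis by simp
next
  case False
  define rho where "rho = sqrt (c1^2 + c2^2)"
  have "rho \<ge> 0" unfolding rho_def by simp
  then have rp: "rho > 0" using False unfolding rho_def by linarith
  have r2: "rho^2 = c1^2 + c2^2" unfolding rho_def by simp
  have "(c1/rho)^2 + (- c2/rho)^2 = (c1^2 + c2^2) / rho^2" by (simp add: power_divide add_divide_distrib)
  also have "\<dots> = 1" unfolding r2[symmetric] using rp by simp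
  finally have "(c1/rho)^2 + (- c2/rho)^2 = 1" .
  then obtain a where a: "c1/rho = cos a" "- c2/rho = sin a" using sincos_total_2pi by metis
  have e1: "c1 * cos a - c2 * sin a = rho" unfolding a[symmetric] using r2 rp by (simp add: field_simps power2_eq_square)
  have e2: "c1 * sin a + c2 * cos a = 0" unfolding a[symmetric] using rp by (simp add: field_simps)
  show ?thesis using rotZ[of c1 a c2 c3] unfolding e1 e2 rho_def by simp
qed

lemma SS_rot_y:
  assumes "rho \<ge> 0"
  shows "SS rho 0 c3 = SS 0 0 (sqrt (rho^2 + c3^2))"
proof (cases "sqrt (rho^2 + c3^2) = 0")
  case True
  then have "rho = 0" "c3 = 0" by (auto simp: sum_power2_eq_zero_iff)
  then show ?thesis by simp
next
  case False
  define n where "n = sqrt (rho^2 + c3^2)"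
  have "n \<ge> 0" unfolding n_def by simp
  then have np: "n > 0" using False unfolding n_def by linarith
  have n2: "n^2 = rho^2 + c3^2" unfolding n_def by simp
  have "(c3/n)^2 + (rho/n)^2 = (rho^2 + c3^2) / n^2" by (simp add: power_divide add_divide_distrib)
  also have "\<dots> = 1" unfolding n2[symmetric] using np by simp
  finally have "(c3/n)^2 + (rho/n)^2 = 1" .
  then obtain b where b: "c3/n = cos b" "rho/n = sin b" using sincos_total_2pi by metis
  have e1: "rho * cos b - c3 * sin b = 0" unfolding b[symmetric] using np by (simp add: field_simps)
  have e2: "rho * sin b + c3 * cos b = n" unfolding b[symmetric] using n2 np by (simp add: field_simps power2_eq_square)
  show ?thesis using rotY[of rho b c3 0] unfolding e1 e2 n_def by simp
qed

lemma SS_eval: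
  assumes "c1^2 + c2^2 + c3^2 \<noteq> 0"
  shows "SS c1 c2 c3 = complex_of_real (4 * pi * sin (sqrt (c1^2 + c2^2 + c3^2)) / sqrt (c1^2 + c2^2 + c3^2))"
proof -
  have "SS c1 c2 c3 = SS 0 0 (sqrt ((sqrt (c1^2 + c2^2))^2 + c3^2))"
    using SS_rot_z[of c1 c2 c3] SS_rot_y[of "sqrt (c1^2 + c2^2)" c3] by simp
  also have "(sqrt (c1^2 + c2^2))^2 = c1^2 + c2^2" by simp
  finally have eq: "SS c1 c2 c3 = SS 0 0 (sqrt (c1^2 + c2^2 + c3^2))" by simp
  have "sqrt (c1^2 + c2^2 + c3^2) \<noteq> 0" using assms by simp
  then show ?thesis unfolding eq by (rule SS_axis)
qed


definition Sv :: "real^3 \<Rightarrow> complex" where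
  "Sv c = Iu (\<lambda>y. exp (\<i> * complex_of_real (inner c y)))"

definition Vv :: "3 \<Rightarrow> real^3 \<Rightarrow> complex" where
  "Vv m c = Iu (\<lambda>y. complex_of_real (y$m) * exp (\<i> * complex_of_real (inner c y)))"

lemma Sv_SS: "Sv c = SS (c$1) (c$2) (c$3)"
  unfolding Sv_def SS_def Iu_def inner_sph1 by (simp add: mult.assoc)

lemma Sv_eval:
  assumes "c \<noteq> 0"
  shows "Sv c = complex_of_real (4 * pi * sin (norm c) / norm c)"
proof -
  have n: "norm c = sqrt ((c$1)^2 + (c$2)^2 + (c$3)^2)" by (rule norm3)
  have "(c$1)^2 + (c$2)^2 + (c$3)^2 \<noteq> 0" using assms n by auto
  then show ?thesis unfolding Sv_SS n by (rule SS_eval)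
qed

lemma Sv_deriv:
  "((\<lambda>s. Sv (c + s *\<^sub>R axis m 1)) has_vector_derivative (\<i> * Vv m c)) (at 0)"
proof -
  have "((\<lambda>s. integral (cbox (0,0) (pi,2*pi)) (\<lambda>q. complex_of_real (sin (fst q)) * exp (\<i> * complex_of_real (inner (c + s *\<^sub>R axis m 1) (sph 1 (fst q) (snd q)))))) has_vector_derivative
     integral (cbox (0,0) (pi,2*pi)) (\<lambda>q. complex_of_real (sin (fst q)) * (\<i> * complex_of_real ((sph 1 (fst q) (snd q))$m) * exp (\<i> * complex_of_real (inner (c + 0 *\<^sub>R axis m 1) (sph 1 (fst q) (snd q))))))) (at 0 within UNIV)"
  proof (rule leibniz_rule_vector_derivative)
    fix s :: real and q :: "real \<times> real"
    have "((\<lambda>s. inner (c + s *\<^sub>R axis m 1) (sph 1 (fst q) (snd q))) has_real_derivative (sph 1 (fst q) (snd q))$m) (at s)"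
    proof -
      have e: "(\<lambda>s. inner (c + s *\<^sub>R axis m 1) (sph 1 (fst q) (snd q))) = (\<lambda>s. inner c (sph 1 (fst q) (snd q)) + s * (sph 1 (fst q) (snd q))$m)"
        by (rule ext) (simp add: inner_add_left inner_commute[of "axis m 1"] inner_axis)
      show ?thesis unfolding e by (auto intro!: derivative_eq_intros)
    qed
    then show "((\<lambda>s. complex_of_real (sin (fst q)) * exp (\<i> * complex_of_real (inner (c + s *\<^sub>R axis m 1) (sph 1 (fst q) (snd q))))) has_vector_derivative
         complex_of_real (sin (fst q)) * (\<i> * complex_of_real ((sph 1 (fst q) (snd q))$m) * exp (\<i> * complex_of_real (inner (c + s *\<^sub>R axis m 1) (sph 1 (fst q) (snd q)))))) (at s within UNIV)"
      by (intro has_vector_derivative_mult_right vd_cexp)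
  next
    fix s :: real
    show "(\<lambda>q. complex_of_real (sin (fst q)) * exp (\<i> * complex_of_real (inner (c + s *\<^sub>R axis m 1) (sph 1 (fst q) (snd q))))) integrable_on cbox (0, 0) (pi, 2 * pi)"
      by (intro integrable_continuous continuous_intros)
  next
    show "continuous_on (UNIV \<times> cbox (0, 0) (pi, 2 * pi))
      (\<lambda>(s, q). complex_of_real (sin (fst q)) * (\<i> * complex_of_real ((sph 1 (fst q) (snd q))$m) * exp (\<i> * complex_of_real (inner (c + s *\<^sub>R axis m 1) (sph 1 (fst q) (snd q))))))"
      unfolding case_prod_beta by (intro continuous_intros)
  qed auto
  then show ?thesis unfolding Sv_def Vv_def Iu_def BX_def
    by (simp add: algebra_simps)
qed

lemma Vv_eval:
  assumes c: "c \<noteq> 0"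
  shows "Vv m c = - \<i> * complex_of_real (4 * pi * (norm c * cos (norm c) - sin (norm c)) / (norm c)^2 * (c$m / norm c))"
proof -
  define N where "N s = norm (c + s *\<^sub>R axis m 1)" for s
  define n where "n = norm c"
  have N0: "N 0 = n" unfolding N_def n_def by simp
  have np: "n > 0" using c unfolding n_def by simp
  have dN: "(N has_real_derivative (c$m / n)) (at 0)" unfolding N_def n_def by (rule deriv_norm_line[OF c])
  define h' where "h' = 4 * pi * (n * cos n - sin n) / n^2 * (c$m / n)"
  have dh: "((\<lambda>s. 4 * pi * sin (N s) / N s) has_real_derivative h') (at 0)"
    using np unfolding h'_def
    by (auto intro!: derivative_eq_intros dN simp: N0 field_simps power2_eq_square)
  have d1: "((\<lambda>s. complex_of_real (4 * pi * sin (N s) / N s)) has_vector_derivative complex_of_real h') (at 0)"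
    by (rule has_vector_derivative_of_real[OF dh])
  define S where "S = {s. c + s *\<^sub>R axis m 1 \<noteq> 0}"
  have oS: "open S" unfolding S_def by (rule open_Collect_neq) (auto intro!: continuous_intros)
  have S0: "0 \<in> S" unfolding S_def using c by simp
  have eqS: "complex_of_real (4 * pi * sin (N s) / N s) = Sv (c + s *\<^sub>R axis m 1)" if "s \<in> S" for s
    using Sv_eval[of "c + s *\<^sub>R axis m 1"] that unfolding S_def N_def by simp
  have d2: "((\<lambda>s. Sv (c + s *\<^sub>R axis m 1)) has_vector_derivative complex_of_real h') (at 0)"
    by (rule has_vector_derivative_transform_within_open[OF d1 oS S0 eqS])
  have "\<i> * Vv m c = complex_of_real h'" by (rule vector_derivative_unique_at[OF Sv_deriv d2])
  then have "- \<i> * (\<i> * Vv m c) = - \<i> * complex_of_real h'" by simp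
  then have "Vv m c = - \<i> * complex_of_real h'" by (simp add: mult.assoc[symmetric])
  then show ?thesis unfolding h'_def n_def .
qed


lemma Iu_cont:
  assumes "continuous_on UNIV f"
  shows "(\<lambda>p. complex_of_real (sin (fst p)) * f (sph 1 (fst p) (snd p))) integrable_on BX"
proof -
  have "continuous_on (cbox (0,0) (pi,2*pi)) (\<lambda>p. f (sph 1 (fst p) (snd p)))"
    by (rule continuous_on_compose2[OF assms continuous_sph[OF continuous_on_fst continuous_on_snd]])
      (auto intro: continuous_on_id)
  then show ?thesis unfolding BX_def by (intro integrable_continuous continuous_intros)
qed

lemma Iu_add: "continuous_on UNIV f \<Longrightarrow> continuous_on UNIV g \<Longrightarrow> Iu (\<lambda>y. f y + g y) = Iu f + Iu g"
  unfolding Iu_def using integral_add[OF Iu_cont Iu_cont, of f g] by (simp add: distrib_left)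

lemma Iu_cmult: "Iu (\<lambda>y. c * f y) = c * Iu f"
proof -
  have "Iu (\<lambda>y. c * f y) = integral BX (\<lambda>p. c * (complex_of_real (sin (fst p)) * f (sph 1 (fst p) (snd p))))"
    unfolding Iu_def by (simp add: mult.left_commute)
  then show ?thesis unfolding Iu_def by (simp add: integral_mult_right)
qed

lemma Iu_sum: "finite A \<Longrightarrow> (\<And>i. i \<in> A \<Longrightarrow> continuous_on UNIV (f i)) \<Longrightarrow> Iu (\<lambda>y. \<Sum>i\<in>A. f i y) = (\<Sum>i\<in>A. Iu (f i))"
proof (induction A rule: finite_induct)
  case empty
  then show ?case unfolding Iu_def by simp
next
  case (insert x F)
  have "Iu (\<lambda>y. \<Sum>i\<in>insert x F. f i y) = Iu (\<lambda>y. f x y + (\<Sum>i\<in>F. f i y))" using insert by simp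
  also have "\<dots> = Iu (f x) + Iu (\<lambda>y. \<Sum>i\<in>F. f i y)"
    by (rule Iu_add) (use insert in \<open>auto intro!: continuous_intros\<close>)
  finally show ?case using insert by simp
qed

definition Ef :: "real \<Rightarrow> real^3 \<Rightarrow> real^3 \<Rightarrow> complex" where
  "Ef k a y = exp (- \<i> * complex_of_real (k * inner a y)) / complex_of_real (4*pi)"

definition Dm :: "real \<Rightarrow> real^3 \<Rightarrow> 3 \<Rightarrow> real^3 \<Rightarrow> complex" where
  "Dm k a m y = (- \<i> * complex_of_real k * complex_of_real (y$m)) * Ef k a y"

lemma cont_Ef[continuous_intros]: "continuous_on S (Ef k a)"
  unfolding Ef_def by (intro continuous_intros) auto

lemma cont_Dm[continuous_intros]: "continuous_on S (Dm k a m)"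
  unfolding Dm_def by (intro continuous_intros)

lemma cnjEf_Ef: "cnj (Ef k a y) * Ef k b y = exp (\<i> * complex_of_real (inner (k *\<^sub>R (a - b)) y)) / complex_of_real (16 * pi^2)"
proof -
  have "cnj (Ef k a y) * Ef k b y = exp (\<i> * complex_of_real (k * inner a y)) * exp (- \<i> * complex_of_real (k * inner b y)) / complex_of_real (16 * pi^2)"
    unfolding Ef_def by (simp add: exp_cnj power2_eq_square)
  also have "exp (\<i> * complex_of_real (k * inner a y)) * exp (- \<i> * complex_of_real (k * inner b y)) = exp (\<i> * complex_of_real (inner (k *\<^sub>R (a - b)) y))"
    unfolding mult_exp_exp by (rule arg_cong[where f=exp]) (simp add: inner_diff_left algebra_simps)
  finally show ?thesis .
qed

lemma Im_G0: "Im (G0 c0 \<omega> a b) = sin (\<omega> / c0 * dist a b) / (4 * pi * dist a b)"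
  unfolding G0_def by (simp add: Im_divide_of_real Im_exp)

lemma Im_dG: "Im (dG k r) = (k * r * cos (k * r) - sin (k * r)) / (4 * pi * r^2)"
  unfolding dG_def by (simp add: Im_divide_of_real Im_exp Re_exp algebra_simps)

lemma K1:
  assumes k: "k = \<omega> / c0" "k > 0" and ab: "a \<noteq> b"
  shows "Iu (\<lambda>y. cnj (Ef k a y) * Ef k b y) = complex_of_real ((1/k) * Im (G0 c0 \<omega> a b))"
proof -
  define r where "r = dist a b"
  have rp: "r > 0" using ab unfolding r_def by simp
  have nc: "norm (k *\<^sub>R (a - b)) = k * r" using k(2) unfolding r_def by (simp add: dist_norm)
  have c0: "k *\<^sub>R (a - b) \<noteq> 0" using k(2) ab by simp
  have "Iu (\<lambda>y. cnj (Ef k a y) * Ef k b y) = Iu (\<lambda>y. (1 / complex_of_real (16 * pi^2)) * exp (\<i> * complex_of_real (inner (k *\<^sub>R (a - b)) y)))"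
    unfolding cnjEf_Ef by simp
  also have "\<dots> = (1 / complex_of_real (16 * pi^2)) * Sv (k *\<^sub>R (a - b))"
    unfolding Iu_cmult Sv_def ..
  also have "\<dots> = complex_of_real (sin (k * r) / (4 * pi * k * r))"
    unfolding Sv_eval[OF c0] nc using rp k(2) by (simp add: field_simps power2_eq_square)
  also have "\<dots> = complex_of_real ((1/k) * Im (G0 c0 \<omega> a b))"
    unfolding Im_G0 k(1)[symmetric] r_def[symmetric] using rp k(2) by (simp add: field_simps)
  finally show ?thesis .
qed


lemma vec_scale_nth: "(k *\<^sub>R (v::real^3))$m = k * v$m" by simp

lemma cm1: "(- \<i> * complex_of_real k) / complex_of_real q * (- \<i> * complex_of_real X) = complex_of_real (- k * X / q)"
  by (simp add: field_simps)

lemma cm2: "(\<i> * complex_of_real k) / complex_of_real q * (- \<i> * complex_of_real X) = complex_of_real (k * X / q)"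
  by (simp add: field_simps)

lemma Im_dG_real: "Im (dG k r * complex_of_real x) = Im (dG k r) * x" by simp

lemma K2:
  assumes k: "k = \<omega> / c0" "k > 0" and aw: "a \<noteq> w"
  shows "Iu (\<lambda>y. cnj (Ef k a y) * Dm k w m y) = complex_of_real ((1/k) * Im (grad (G0 c0 \<omega> a) w $ m))"
proof -
  define r where "r = dist a w"
  have rp: "r > 0" using aw unfolding r_def by simp
  have nc: "norm (k *\<^sub>R (a - w)) = k * r" using k(2) unfolding r_def by (simp add: dist_norm)
  have c0: "k *\<^sub>R (a - w) \<noteq> 0" using k(2) aw by simp
  have pt: "cnj (Ef k a y) * Dm k w m y = ((- \<i> * complex_of_real k) / complex_of_real (16 * pi^2)) *
     (complex_of_real (y$m) * exp (\<i> * complex_of_real (inner (k *\<^sub>R (a - w)) y)))" for y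
  proof -
    have "cnj (Ef k a y) * Dm k w m y = (- \<i> * complex_of_real k * complex_of_real (y$m)) * (cnj (Ef k a y) * Ef k w y)"
      unfolding Dm_def by (simp add: algebra_simps)
    also have "\<dots> = (- \<i> * complex_of_real k * complex_of_real (y$m)) * (exp (\<i> * complex_of_real (inner (k *\<^sub>R (a - w)) y)) / complex_of_real (16 * pi^2))"
      unfolding cnjEf_Ef ..
    finally show ?thesis by (simp add: field_simps)
  qed
  have "Iu (\<lambda>y. cnj (Ef k a y) * Dm k w m y) = ((- \<i> * complex_of_real k) / complex_of_real (16 * pi^2)) * Vv m (k *\<^sub>R (a - w))"
    unfolding pt Iu_cmult Vv_def ..
  also have "\<dots> = complex_of_real (- k * (4 * pi * (k * r * cos (k * r) - sin (k * r)) / (k * r)^2 * (k * (a - w)$m / (k * r))) / (16 * pi^2))"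
    unfolding Vv_eval[OF c0] nc vec_scale_nth of_real_power[symmetric] by (rule cm1)
  also have "\<dots> = complex_of_real ((1/k) * Im (grad (G0 c0 \<omega> a) w $ m))"
  proof -
    have g: "grad (G0 c0 \<omega> a) w $ m = dG k r * complex_of_real ((w - a)$m / r)"
      unfolding grad_G0[OF aw] k(1) r_def by simp
    have im: "Im (grad (G0 c0 \<omega> a) w $ m) = (k * r * cos (k * r) - sin (k * r)) / (4 * pi * r^2) * ((w - a)$m / r)"
      unfolding g Im_dG_real Im_dG ..
    show ?thesis unfolding im using rp k(2) by (simp add: field_simps power2_eq_square del: of_real_mult of_real_divide of_real_diff)
  qed
  finally show ?thesis .
qed

lemma K3:
  assumes k: "k = \<omega> / c0" "k > 0" and wb: "w \<noteq> b"
  shows "Iu (\<lambda>y. cnj (Dm k w m y) * Ef k b y) = complex_of_real ((1/k) * Im (grad (G0 c0 \<omega> b) w $ m))"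
proof -
  define r where "r = dist b w"
  have rp: "r > 0" using wb unfolding r_def by simp
  have nc: "norm (k *\<^sub>R (w - b)) = k * r" using k(2) unfolding r_def by (simp add: dist_norm norm_minus_commute)
  have c0: "k *\<^sub>R (w - b) \<noteq> 0" using k(2) wb by simp
  have pt: "cnj (Dm k w m y) * Ef k b y = ((\<i> * complex_of_real k) / complex_of_real (16 * pi^2)) *
     (complex_of_real (y$m) * exp (\<i> * complex_of_real (inner (k *\<^sub>R (w - b)) y)))" for y
  proof -
    have "cnj (Dm k w m y) * Ef k b y = (\<i> * complex_of_real k * complex_of_real (y$m)) * (cnj (Ef k w y) * Ef k b y)"
      unfolding Dm_def by (simp add: algebra_simps)
    also have "\<dots> = (\<i> * complex_of_real k * complex_of_real (y$m)) * (exp (\<i> * complex_of_real (inner (k *\<^sub>R (w - b)) y)) / complex_of_real (16 * pi^2))"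
      unfolding cnjEf_Ef ..
    finally show ?thesis by (simp add: field_simps)
  qed
  have "Iu (\<lambda>y. cnj (Dm k w m y) * Ef k b y) = ((\<i> * complex_of_real k) / complex_of_real (16 * pi^2)) * Vv m (k *\<^sub>R (w - b))"
    unfolding pt Iu_cmult Vv_def ..
  also have "\<dots> = complex_of_real (k * (4 * pi * (k * r * cos (k * r) - sin (k * r)) / (k * r)^2 * (k * (w - b)$m / (k * r))) / (16 * pi^2))"
    unfolding Vv_eval[OF c0] nc vec_scale_nth of_real_power[symmetric] by (rule cm2)
  also have "\<dots> = complex_of_real ((1/k) * Im (grad (G0 c0 \<omega> b) w $ m))"
  proof -
    have bw: "b \<noteq> w" using wb by simp
    have g: "grad (G0 c0 \<omega> b) w $ m = dG k r * complex_of_real ((w - b)$m / r)"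
      unfolding grad_G0[OF bw] k(1) r_def by simp
    have im: "Im (grad (G0 c0 \<omega> b) w $ m) = (k * r * cos (k * r) - sin (k * r)) / (4 * pi * r^2) * ((w - b)$m / r)"
      unfolding g Im_dG_real Im_dG ..
    show ?thesis unfolding im using rp k(2) by (simp add: field_simps power2_eq_square del: of_real_mult of_real_divide of_real_diff)
  qed
  finally show ?thesis .
qed


lemma G0_sym: "G0 c0 \<omega> a b = G0 c0 \<omega> b a"
  unfolding G0_def by (simp add: dist_commute)

lemma rad_Ef: "rad (\<omega>/c0) (G0 c0 \<omega> a) (Ef (\<omega>/c0) a)"
  unfolding Ef_def[abs_def] by (rule rad_G0)

lemma rad_Dm: "rad (\<omega>/c0) (\<lambda>y. grad (G0 c0 \<omega> y) a $ m) (Dm (\<omega>/c0) a m)"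
  unfolding Dm_def[abs_def] Ef_def[abs_def] by (rule rad_grad)

definition P1j :: "real \<Rightarrow> real \<Rightarrow> (nat \<Rightarrow> real^3) \<Rightarrow> complex \<Rightarrow> complex^3^3 \<Rightarrow> nat \<Rightarrow> real^3 \<Rightarrow> real^3 \<Rightarrow> complex" where
  "P1j c0 \<omega> z \<rho> M j x y = (\<rho> * G0 c0 \<omega> x (z j)) * Ef (\<omega>/c0) (z j) y
     + (\<Sum>i\<in>UNIV. \<Sum>m\<in>UNIV. (grad (G0 c0 \<omega> x) (z j) $ i * M$i$m) * Dm (\<omega>/c0) (z j) m y)"

definition PG :: "real \<Rightarrow> real \<Rightarrow> nat \<Rightarrow> (nat \<Rightarrow> real^3) \<Rightarrow> complex \<Rightarrow> complex^3^3 \<Rightarrow> real \<Rightarrow> real^3 \<Rightarrow> real^3 \<Rightarrow> complex" where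
  "PG c0 \<omega> J z \<rho> M t x y = Ef (\<omega>/c0) x y + complex_of_real t * (\<Sum>j<J. P1j c0 \<omega> z \<rho> M j x y)"

lemma cont_P1j[continuous_intros]: "continuous_on S (P1j c0 \<omega> z \<rho> M j x)"
  unfolding P1j_def[abs_def] by (intro continuous_intros)

lemma rad_full:
  "rad (\<omega>/c0) (Gfull c0 \<omega> J z (complex_of_real t * \<rho>) (scaleM t M) x) (PG c0 \<omega> J z \<rho> M t x)"
proof -
  have r: "rad (\<omega>/c0) (\<lambda>y. G0 c0 \<omega> x y + (\<Sum>j<J. (complex_of_real t * \<rho> * G0 c0 \<omega> x (z j)) * G0 c0 \<omega> (z j) y)
      + (\<Sum>j<J. \<Sum>i\<in>UNIV. \<Sum>m\<in>UNIV. (grad (G0 c0 \<omega> x) (z j) $ i * (complex_of_real t * M$i$m)) * grad (G0 c0 \<omega> y) (z j) $ m))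
    (\<lambda>y. Ef (\<omega>/c0) x y + (\<Sum>j<J. (complex_of_real t * \<rho> * G0 c0 \<omega> x (z j)) * Ef (\<omega>/c0) (z j) y)
      + (\<Sum>j<J. \<Sum>i\<in>UNIV. \<Sum>m\<in>UNIV. (grad (G0 c0 \<omega> x) (z j) $ i * (complex_of_real t * M$i$m)) * Dm (\<omega>/c0) (z j) m y))"
    by (intro rad_add rad_sum rad_cmult rad_Ef rad_Dm finite_lessThan finite)
  have e1: "(\<lambda>y. G0 c0 \<omega> x y + (\<Sum>j<J. (complex_of_real t * \<rho> * G0 c0 \<omega> x (z j)) * G0 c0 \<omega> (z j) y)
      + (\<Sum>j<J. \<Sum>i\<in>UNIV. \<Sum>m\<in>UNIV. (grad (G0 c0 \<omega> x) (z j) $ i * (complex_of_real t * M$i$m)) * grad (G0 c0 \<omega> y) (z j) $ m))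
     = Gfull c0 \<omega> J z (complex_of_real t * \<rho>) (scaleM t M) x"
    unfolding Gfull_def[abs_def] bil_def scaleM_def
    by (rule ext) (simp add: G0_sym[of c0 \<omega> _ "z _"] algebra_simps)
  have e2: "(\<lambda>y. Ef (\<omega>/c0) x y + (\<Sum>j<J. (complex_of_real t * \<rho> * G0 c0 \<omega> x (z j)) * Ef (\<omega>/c0) (z j) y)
      + (\<Sum>j<J. \<Sum>i\<in>UNIV. \<Sum>m\<in>UNIV. (grad (G0 c0 \<omega> x) (z j) $ i * (complex_of_real t * M$i$m)) * Dm (\<omega>/c0) (z j) m y))
     = PG c0 \<omega> J z \<rho> M t x"
    unfolding PG_def[abs_def] P1j_def
    by (rule ext) (simp add: sum_distrib_left sum.distrib algebra_simps)
  show ?thesis using r unfolding e1 e2 .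
qed


lemma hvd_G0:
  assumes "y \<noteq> a"
  shows "((\<lambda>s. G0 c0 \<omega> y (a + s *\<^sub>R axis m 1)) has_vector_derivative (grad (G0 c0 \<omega> y) a $ m)) (at 0)"
proof -
  define k where "k = \<omega>/c0"
  define v where "v = a - y"
  have v0: "v \<noteq> 0" using assms unfolding v_def by simp
  define H where "H z = exp (\<i> * complex_of_real k * z) / (complex_of_real (4*pi) * z)" for z
  define r where "r s = norm (v + s *\<^sub>R axis m 1)" for s
  have eqf: "(\<lambda>s. G0 c0 \<omega> y (a + s *\<^sub>R axis m 1)) = H \<circ> (\<lambda>s. complex_of_real (r s))"
  proof
    fix s
    have "dist y (a + s *\<^sub>R axis m 1) = r s" unfolding r_def v_def dist_norm
      by (metis (no_types, lifting) add.commute add_diff_eq diff_add_eq_diff_diff_swap norm_minus_commute)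
    then show "G0 c0 \<omega> y (a + s *\<^sub>R axis m 1) = (H \<circ> (\<lambda>s. complex_of_real (r s))) s"
      unfolding G0_def H_def k_def o_def by (simp add: mult.assoc)
  qed
  have d1: "((\<lambda>s. complex_of_real (r s)) has_vector_derivative complex_of_real (v$m / norm v)) (at 0)"
    unfolding r_def by (intro has_vector_derivative_of_real deriv_norm_line v0)
  have r0: "r 0 = norm v" unfolding r_def by simp
  have d2: "(H has_field_derivative dG k (norm v)) (at (complex_of_real (r 0)))"
    unfolding r0 H_def using v0 by (intro H_deriv) simp
  have h: "((\<lambda>s. G0 c0 \<omega> y (a + s *\<^sub>R axis m 1)) has_vector_derivative
         (complex_of_real (v$m / norm v) * dG k (norm v))) (at 0)"
    unfolding eqf by (rule field_vector_diff_chain_at[OF d1 d2])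
  have "grad (G0 c0 \<omega> y) a $ m = complex_of_real (v$m / norm v) * dG k (norm v)"
    unfolding grad_def using vector_derivative_at[OF h] by simp
  then show ?thesis using h by simp
qed

lemma grad_cnj_G0:
  assumes "y \<noteq> a"
  shows "grad (\<lambda>w. cnj (G0 c0 \<omega> y w)) a = (\<chi> m. cnj (grad (G0 c0 \<omega> y) a $ m))"
  unfolding vec_eq_iff
proof
  fix m
  have "vector_derivative (\<lambda>s. cnj (G0 c0 \<omega> y (a + s *\<^sub>R axis m 1))) (at 0) = cnj (grad (G0 c0 \<omega> y) a $ m)"
    by (rule vector_derivative_at[OF has_vector_derivative_cnj[OF hvd_G0[OF assms]]])
  then show "grad (\<lambda>w. cnj (G0 c0 \<omega> y w)) a $ m = (\<chi> m. cnj (grad (G0 c0 \<omega> y) a $ m)) $ m"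
    unfolding grad_def by simp
qed

lemma ofIm: "complex_of_real (Im z) = (z - cnj z) / (2 * \<i>)"
  by (simp add: complex_eq_iff)

lemma idI: "\<rho> * Gb * complex_of_real (Im Ga) + cnj (\<rho> * Ga) * complex_of_real (Im Gb)
   = complex_of_real (Im (\<rho> * Ga * Gb)) - complex_of_real (Im \<rho>) * cnj Ga * Gb"
  unfolding ofIm by (simp add: field_simps)

lemma idII: "complex_of_real (Im x) * y * w + cnj x * cnj y * complex_of_real (Im w)
   = complex_of_real (Im (x * y * w)) - cnj x * complex_of_real (Im y) * w"
  unfolding ofIm by (simp add: field_simps)

lemma bil_scale: "bil u (scaleM t M) v = complex_of_real t * bil u M v"
  unfolding bil_def scaleM_def by (simp add: sum_distrib_left algebra_simps)

lemma ImM_scale: "bil u (ImM (scaleM t M)) v = complex_of_real t * bil u (ImM M) v"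
  unfolding bil_def scaleM_def ImM_def by (simp add: sum_distrib_left algebra_simps)

lemma Im_oft: "Im (complex_of_real t * z) = t * Im z" by simp


lemma Qexp_lin:
  "Qexp c0 \<omega> J z (complex_of_real t * \<rho>) (scaleM t M) xr xr'
   = complex_of_real (c0/\<omega>) * complex_of_real (Im (G0 c0 \<omega> xr xr'))
     + complex_of_real t * (Qexp c0 \<omega> J z \<rho> M xr xr' - complex_of_real (c0/\<omega>) * complex_of_real (Im (G0 c0 \<omega> xr xr')))"
  unfolding Qexp_def bil_scale ImM_scale
  by (simp add: mult.assoc Im_oft sum_distrib_left algebra_simps)

lemma Q_expand:
  fixes k c0 \<omega> :: real
  defines "k \<equiv> \<omega>/c0"
  shows "Iu (\<lambda>y. cnj (PG c0 \<omega> J z \<rho> M t xr y) * PG c0 \<omega> J z \<rho> M t xr' y)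
   = Iu (\<lambda>y. cnj (Ef k xr y) * Ef k xr' y)
     + complex_of_real t * ((\<Sum>j<J. Iu (\<lambda>y. cnj (Ef k xr y) * P1j c0 \<omega> z \<rho> M j xr' y))
                           + (\<Sum>j<J. Iu (\<lambda>y. cnj (P1j c0 \<omega> z \<rho> M j xr y) * Ef k xr' y)))
     + complex_of_real t ^ 2 * Iu (\<lambda>y. cnj (\<Sum>j<J. P1j c0 \<omega> z \<rho> M j xr y) * (\<Sum>j<J. P1j c0 \<omega> z \<rho> M j xr' y))"
proof -
  define F1 where "F1 y = cnj (Ef k xr y) * Ef k xr' y" for y
  define G1 where "G1 y = (\<Sum>j<J. cnj (Ef k xr y) * P1j c0 \<omega> z \<rho> M j xr' y)" for y
  define G2 where "G2 y = (\<Sum>j<J. cnj (P1j c0 \<omega> z \<rho> M j xr y) * Ef k xr' y)" for y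
  define F3 where "F3 y = cnj (\<Sum>j<J. P1j c0 \<omega> z \<rho> M j xr y) * (\<Sum>j<J. P1j c0 \<omega> z \<rho> M j xr' y)" for y
  have pt: "cnj (PG c0 \<omega> J z \<rho> M t xr y) * PG c0 \<omega> J z \<rho> M t xr' y
      = F1 y + (complex_of_real t * G1 y + (complex_of_real t * G2 y + complex_of_real t ^ 2 * F3 y))" for y
    unfolding PG_def F1_def G1_def G2_def F3_def k_def
    by (simp add: cnj_sum sum_distrib_left sum_distrib_right algebra_simps power2_eq_square)
  have cF1: "continuous_on UNIV F1" unfolding F1_def by (intro continuous_intros)
  have cG1: "continuous_on UNIV G1" unfolding G1_def by (intro continuous_intros)
  have cG2: "continuous_on UNIV G2" unfolding G2_def by (intro continuous_intros)
  have cF3: "continuous_on UNIV F3" unfolding F3_def by (intro continuous_intros)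
  have "Iu (\<lambda>y. cnj (PG c0 \<omega> J z \<rho> M t xr y) * PG c0 \<omega> J z \<rho> M t xr' y)
      = Iu F1 + (complex_of_real t * Iu G1 + (complex_of_real t * Iu G2 + complex_of_real t ^ 2 * Iu F3))"
    unfolding pt using cF1 cG1 cG2 cF3
    by (simp add: Iu_add Iu_cmult continuous_intros)
  moreover have "Iu G1 = (\<Sum>j<J. Iu (\<lambda>y. cnj (Ef k xr y) * P1j c0 \<omega> z \<rho> M j xr' y))"
    unfolding G1_def by (rule Iu_sum) (auto intro!: continuous_intros)
  moreover have "Iu G2 = (\<Sum>j<J. Iu (\<lambda>y. cnj (P1j c0 \<omega> z \<rho> M j xr y) * Ef k xr' y))"
    unfolding G2_def by (rule Iu_sum) (auto intro!: continuous_intros)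
  ultimately show ?thesis unfolding F1_def F3_def by (simp add: algebra_simps)
qed


lemma sym_swap:
  assumes sym: "transpose M = M"
  shows "(\<Sum>i\<in>UNIV. \<Sum>m\<in>UNIV. (b$i * M$i$m) * (f (a$m) :: complex))
       = (\<Sum>i\<in>UNIV. \<Sum>m\<in>UNIV. f (a$i) * M$i$m * b$m)"
proof -
  have Mt: "M$m$i = M$i$m" for i m using sym unfolding transpose_def by (metis vec_lambda_beta)
  have "(\<Sum>i\<in>UNIV. \<Sum>m\<in>UNIV. (b$i * M$i$m) * f (a$m)) = (\<Sum>m\<in>UNIV. \<Sum>i\<in>UNIV. (b$i * M$i$m) * f (a$m))"
    by (rule sum.swap)
  also have "\<dots> = (\<Sum>i\<in>UNIV. \<Sum>m\<in>UNIV. f (a$i) * M$i$m * b$m)"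
    by (simp add: Mt algebra_simps)
  finally show ?thesis .
qed

lemma Iu_sum2:
  assumes "finite A" "finite B" "\<And>m. continuous_on UNIV (g m)"
  shows "Iu (\<lambda>y. \<Sum>i\<in>A. \<Sum>m\<in>B. c i m * g m y) = (\<Sum>i\<in>A. \<Sum>m\<in>B. c i m * Iu (g m))"
proof -
  have "Iu (\<lambda>y. \<Sum>i\<in>A. \<Sum>m\<in>B. c i m * g m y) = (\<Sum>i\<in>A. Iu (\<lambda>y. \<Sum>m\<in>B. c i m * g m y))"
    by (rule Iu_sum[OF assms(1)]) (use assms(3) in \<open>auto intro!: continuous_intros\<close>)
  also have "\<dots> = (\<Sum>i\<in>A. \<Sum>m\<in>B. c i m * Iu (g m))"
  proof (rule sum.cong[OF refl])
    fix i
    have "Iu (\<lambda>y. \<Sum>m\<in>B. c i m * g m y) = (\<Sum>m\<in>B. Iu (\<lambda>y. c i m * g m y))"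
      by (rule Iu_sum[OF assms(2)]) (use assms(3) in \<open>auto intro!: continuous_intros\<close>)
    then show "Iu (\<lambda>y. \<Sum>m\<in>B. c i m * g m y) = (\<Sum>m\<in>B. c i m * Iu (g m))" by (simp add: Iu_cmult)
  qed
  finally show ?thesis .
qed

lemma Bj:
  fixes k c0 \<omega> :: real
  assumes k: "k = \<omega> / c0" "k > 0" and zr: "z j \<noteq> xr" and zr': "z j \<noteq> xr'" and sym: "transpose M = M"
  shows "Iu (\<lambda>y. cnj (Ef k xr y) * P1j c0 \<omega> z \<rho> M j xr' y) + Iu (\<lambda>y. cnj (P1j c0 \<omega> z \<rho> M j xr y) * Ef k xr' y)
   = complex_of_real (c0/\<omega>) * ((complex_of_real (Im (\<rho> * G0 c0 \<omega> xr (z j) * G0 c0 \<omega> xr' (z j)))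
          - complex_of_real (Im \<rho>) * cnj (G0 c0 \<omega> xr (z j)) * G0 c0 \<omega> xr' (z j))
       + (complex_of_real (Im (bil (grad (G0 c0 \<omega> xr) (z j)) M (grad (G0 c0 \<omega> xr') (z j))))
          - bil (grad (\<lambda>w. cnj (G0 c0 \<omega> xr w)) (z j)) (ImM M) (grad (G0 c0 \<omega> xr') (z j))))"
proof -
  define Ga where "Ga = G0 c0 \<omega> xr (z j)"
  define Gb where "Gb = G0 c0 \<omega> xr' (z j)"
  define a where "a = grad (G0 c0 \<omega> xr) (z j)"
  define b where "b = grad (G0 c0 \<omega> xr') (z j)"
  have kinv: "1/k = c0/\<omega>" using k by simp
  have P1a: "P1j c0 \<omega> z \<rho> M j xr' y = (\<rho> * Gb) * Ef k (z j) y + (\<Sum>i\<in>UNIV. \<Sum>m\<in>UNIV. (b$i * M$i$m) * Dm k (z j) m y)" for y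
    unfolding P1j_def Gb_def b_def k(1) ..
  have P1b: "P1j c0 \<omega> z \<rho> M j xr y = (\<rho> * Ga) * Ef k (z j) y + (\<Sum>i\<in>UNIV. \<Sum>m\<in>UNIV. (a$i * M$i$m) * Dm k (z j) m y)" for y
    unfolding P1j_def Ga_def a_def k(1) ..
  have S1: "Iu (\<lambda>y. cnj (Ef k xr y) * P1j c0 \<omega> z \<rho> M j xr' y)
      = (\<rho> * Gb) * complex_of_real ((1/k) * Im Ga)
        + (\<Sum>i\<in>UNIV. \<Sum>m\<in>UNIV. (b$i * M$i$m) * complex_of_real ((1/k) * Im (a$m)))"
  proof -
    have pt: "cnj (Ef k xr y) * P1j c0 \<omega> z \<rho> M j xr' y = (\<rho> * Gb) * (cnj (Ef k xr y) * Ef k (z j) y)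
       + (\<Sum>i\<in>UNIV. \<Sum>m\<in>UNIV. (b$i * M$i$m) * (cnj (Ef k xr y) * Dm k (z j) m y))" for y
      unfolding P1a by (simp add: sum_distrib_left algebra_simps)
    have "Iu (\<lambda>y. cnj (Ef k xr y) * P1j c0 \<omega> z \<rho> M j xr' y)
       = (\<rho> * Gb) * Iu (\<lambda>y. cnj (Ef k xr y) * Ef k (z j) y)
         + (\<Sum>i\<in>UNIV. \<Sum>m\<in>UNIV. (b$i * M$i$m) * Iu (\<lambda>y. cnj (Ef k xr y) * Dm k (z j) m y))"
    proof -
      have h2: "Iu (\<lambda>y. \<Sum>i\<in>UNIV. \<Sum>m\<in>UNIV. (b$i * M$i$m) * (cnj (Ef k xr y) * Dm k (z j) m y))
         = (\<Sum>i\<in>UNIV. \<Sum>m\<in>UNIV. (b$i * M$i$m) * Iu (\<lambda>y. cnj (Ef k xr y) * Dm k (z j) m y))"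
        by (rule Iu_sum2) (auto intro!: continuous_intros)
      show ?thesis unfolding pt
        by (subst Iu_add) (auto intro!: continuous_intros simp: Iu_cmult h2)
    qed
    also have "\<dots> = (\<rho> * Gb) * complex_of_real ((1/k) * Im Ga)
        + (\<Sum>i\<in>UNIV. \<Sum>m\<in>UNIV. (b$i * M$i$m) * complex_of_real ((1/k) * Im (a$m)))"
      unfolding K1[OF k zr[symmetric]] K2[OF k zr[symmetric]] Ga_def a_def ..
    finally show ?thesis .
  qed
  have S2: "Iu (\<lambda>y. cnj (P1j c0 \<omega> z \<rho> M j xr y) * Ef k xr' y)
      = cnj (\<rho> * Ga) * complex_of_real ((1/k) * Im Gb)
        + (\<Sum>i\<in>UNIV. \<Sum>m\<in>UNIV. cnj (a$i * M$i$m) * complex_of_real ((1/k) * Im (b$m)))"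
  proof -
    have pt: "cnj (P1j c0 \<omega> z \<rho> M j xr y) * Ef k xr' y = cnj (\<rho> * Ga) * (cnj (Ef k (z j) y) * Ef k xr' y)
       + (\<Sum>i\<in>UNIV. \<Sum>m\<in>UNIV. cnj (a$i * M$i$m) * (cnj (Dm k (z j) m y) * Ef k xr' y))" for y
      unfolding P1b by (simp add: cnj_sum sum_distrib_right sum_distrib_left algebra_simps)
    have "Iu (\<lambda>y. cnj (P1j c0 \<omega> z \<rho> M j xr y) * Ef k xr' y)
       = cnj (\<rho> * Ga) * Iu (\<lambda>y. cnj (Ef k (z j) y) * Ef k xr' y)
         + (\<Sum>i\<in>UNIV. \<Sum>m\<in>UNIV. cnj (a$i * M$i$m) * Iu (\<lambda>y. cnj (Dm k (z j) m y) * Ef k xr' y))"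
    proof -
      have h2: "Iu (\<lambda>y. \<Sum>i\<in>UNIV. \<Sum>m\<in>UNIV. cnj (a$i * M$i$m) * (cnj (Dm k (z j) m y) * Ef k xr' y))
         = (\<Sum>i\<in>UNIV. \<Sum>m\<in>UNIV. cnj (a$i * M$i$m) * Iu (\<lambda>y. cnj (Dm k (z j) m y) * Ef k xr' y))"
        by (rule Iu_sum2) (auto intro!: continuous_intros)
      show ?thesis unfolding pt
        by (subst Iu_add) (auto intro!: continuous_intros simp: Iu_cmult h2 simp del: complex_cnj_mult)
    qed
    also have "\<dots> = cnj (\<rho> * Ga) * complex_of_real ((1/k) * Im Gb)
        + (\<Sum>i\<in>UNIV. \<Sum>m\<in>UNIV. cnj (a$i * M$i$m) * complex_of_real ((1/k) * Im (b$m)))"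
      unfolding K1[OF k zr'] K3[OF k zr'] Gb_def b_def G0_sym[of c0 \<omega> "z j" xr'] ..
    finally show ?thesis .
  qed
  have ca: "grad (\<lambda>w. cnj (G0 c0 \<omega> xr w)) (z j) = (\<chi> m. cnj (a$m))"
    unfolding a_def by (rule grad_cnj_G0) (use zr in auto)
  have part1: "(\<rho> * Gb) * complex_of_real (Im Ga) + cnj (\<rho> * Ga) * complex_of_real (Im Gb)
     = complex_of_real (Im (\<rho> * Ga * Gb)) - complex_of_real (Im \<rho>) * cnj Ga * Gb"
    by (rule idI)
  have part2: "(\<Sum>i\<in>UNIV. \<Sum>m\<in>UNIV. (b$i * M$i$m) * complex_of_real (Im (a$m)))
      + (\<Sum>i\<in>UNIV. \<Sum>m\<in>UNIV. cnj (a$i * M$i$m) * complex_of_real (Im (b$m)))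
     = complex_of_real (Im (bil a M b)) - bil (\<chi> m. cnj (a$m)) (ImM M) b"
  proof -
    have "(\<Sum>i\<in>UNIV. \<Sum>m\<in>UNIV. (b$i * M$i$m) * complex_of_real (Im (a$m)))
        = (\<Sum>i\<in>UNIV. \<Sum>m\<in>UNIV. complex_of_real (Im (a$i)) * M$i$m * b$m)"
      by (rule sym_swap[OF sym])
    then have "(\<Sum>i\<in>UNIV. \<Sum>m\<in>UNIV. (b$i * M$i$m) * complex_of_real (Im (a$m)))
      + (\<Sum>i\<in>UNIV. \<Sum>m\<in>UNIV. cnj (a$i * M$i$m) * complex_of_real (Im (b$m)))
      = (\<Sum>i\<in>UNIV. \<Sum>m\<in>UNIV. complex_of_real (Im (a$i)) * M$i$m * b$m + cnj (a$i) * cnj (M$i$m) * complex_of_real (Im (b$m)))"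
      by (simp add: sum.distrib)
    also have "\<dots> = (\<Sum>i\<in>UNIV. \<Sum>m\<in>UNIV. complex_of_real (Im (a$i * M$i$m * b$m)) - cnj (a$i) * complex_of_real (Im (M$i$m)) * b$m)"
      by (simp only: idII)
    also have "\<dots> = complex_of_real (Im (bil a M b)) - bil (\<chi> m. cnj (a$m)) (ImM M) b"
      unfolding bil_def ImM_def by (simp add: Im_sum sum_subtractf)
    finally show ?thesis .
  qed
  show ?thesis
    unfolding S1 S2 ca Ga_def[symmetric] Gb_def[symmetric] a_def[symmetric] b_def[symmetric]
    unfolding part1[symmetric] part2[symmetric] kinv[symmetric]
    by (simp add: sum_distrib_left algebra_simps)
qed


theorem proposition3p1:
  fixes c0 \<omega> :: real and J :: nat and z :: "nat \<Rightarrow> real^3" and \<rho> :: complex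
    and M :: "complex^3^3" and xr xr' :: "real^3"
  assumes "c0 > 0" and "\<omega> > 0"
    and "transpose M = M"
    and "xr \<noteq> xr'"
    and "\<forall>j<J. z j \<noteq> xr \<and> z j \<noteq> xr'"
  shows "\<exists>Q :: real \<Rightarrow> complex.
           (\<forall>t. ((\<lambda>L. QL c0 \<omega> J z (complex_of_real t * \<rho>) (scaleM t M) L xr xr')
                    \<longlongrightarrow> Q t) at_top)
         \<and> (\<lambda>t. Q t - Qexp c0 \<omega> J z (complex_of_real t * \<rho>) (scaleM t M) xr xr')
             \<in> O[at 0](\<lambda>t. complex_of_real (t^2))"
proof -
  define k where "k = \<omega>/c0"
  have kpos: "k > 0" unfolding k_def using assms(1,2) by simp
  define Q where "Q t = Iu (\<lambda>y. cnj (PG c0 \<omega> J z \<rho> M t xr y) * PG c0 \<omega> J z \<rho> M t xr' y)" for t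
  have lim: "((\<lambda>L. QL c0 \<omega> J z (complex_of_real t * \<rho>) (scaleM t M) L xr xr') \<longlongrightarrow> Q t) at_top" for t
    unfolding QL_def Q_def by (rule rad_lim[OF rad_full rad_full])
  define A' where "A' = complex_of_real (c0/\<omega>) * complex_of_real (Im (G0 c0 \<omega> xr xr'))"
  define C where "C = Iu (\<lambda>y. cnj (\<Sum>j<J. P1j c0 \<omega> z \<rho> M j xr y) * (\<Sum>j<J. P1j c0 \<omega> z \<rho> M j xr' y))"
  have A: "Iu (\<lambda>y. cnj (Ef k xr y) * Ef k xr' y) = A'"
  proof -
    have "Iu (\<lambda>y. cnj (Ef k xr y) * Ef k xr' y) = complex_of_real ((1/k) * Im (G0 c0 \<omega> xr xr'))"
      by (rule K1[OF k_def kpos assms(4)])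
    also have "\<dots> = A'" unfolding A'_def k_def by simp
    finally show ?thesis .
  qed
  have B: "(\<Sum>j<J. Iu (\<lambda>y. cnj (Ef k xr y) * P1j c0 \<omega> z \<rho> M j xr' y))
         + (\<Sum>j<J. Iu (\<lambda>y. cnj (P1j c0 \<omega> z \<rho> M j xr y) * Ef k xr' y))
         = Qexp c0 \<omega> J z \<rho> M xr xr' - A'"
  proof -
    have "(\<Sum>j<J. Iu (\<lambda>y. cnj (Ef k xr y) * P1j c0 \<omega> z \<rho> M j xr' y))
         + (\<Sum>j<J. Iu (\<lambda>y. cnj (P1j c0 \<omega> z \<rho> M j xr y) * Ef k xr' y))
       = (\<Sum>j<J. Iu (\<lambda>y. cnj (Ef k xr y) * P1j c0 \<omega> z \<rho> M j xr' y) + Iu (\<lambda>y. cnj (P1j c0 \<omega> z \<rho> M j xr y) * Ef k xr' y))"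
      by (simp add: sum.distrib)
    also have "\<dots> = (\<Sum>j<J. complex_of_real (c0/\<omega>) * ((complex_of_real (Im (\<rho> * G0 c0 \<omega> xr (z j) * G0 c0 \<omega> xr' (z j)))
          - complex_of_real (Im \<rho>) * cnj (G0 c0 \<omega> xr (z j)) * G0 c0 \<omega> xr' (z j))
       + (complex_of_real (Im (bil (grad (G0 c0 \<omega> xr) (z j)) M (grad (G0 c0 \<omega> xr') (z j))))
          - bil (grad (\<lambda>w. cnj (G0 c0 \<omega> xr w)) (z j)) (ImM M) (grad (G0 c0 \<omega> xr') (z j)))))"
    proof (rule sum.cong[OF refl])
      fix j assume "j \<in> {..<J}"
      then have zj: "z j \<noteq> xr" "z j \<noteq> xr'" using assms(5) by auto
      show "Iu (\<lambda>y. cnj (Ef k xr y) * P1j c0 \<omega> z \<rho> M j xr' y) + Iu (\<lambda>y. cnj (P1j c0 \<omega> z \<rho> M j xr y) * Ef k xr' y)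
        = complex_of_real (c0/\<omega>) * ((complex_of_real (Im (\<rho> * G0 c0 \<omega> xr (z j) * G0 c0 \<omega> xr' (z j)))
          - complex_of_real (Im \<rho>) * cnj (G0 c0 \<omega> xr (z j)) * G0 c0 \<omega> xr' (z j))
       + (complex_of_real (Im (bil (grad (G0 c0 \<omega> xr) (z j)) M (grad (G0 c0 \<omega> xr') (z j))))
          - bil (grad (\<lambda>w. cnj (G0 c0 \<omega> xr w)) (z j)) (ImM M) (grad (G0 c0 \<omega> xr') (z j))))"
        by (rule Bj[of k \<omega> c0 z j xr xr' M \<rho>, OF k_def kpos zj assms(3)])
    qed
    also have "\<dots> = Qexp c0 \<omega> J z \<rho> M xr xr' - A'"
      unfolding Qexp_def A'_def
      by (simp add: sum_distrib_left sum.distrib sum_subtractf algebra_simps)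
    finally show ?thesis .
  qed
  have eq: "Q t - Qexp c0 \<omega> J z (complex_of_real t * \<rho>) (scaleM t M) xr xr' = complex_of_real (t^2) * C" for t
  proof -
    have QE: "Q t = Iu (\<lambda>y. cnj (Ef k xr y) * Ef k xr' y)
     + complex_of_real t * ((\<Sum>j<J. Iu (\<lambda>y. cnj (Ef k xr y) * P1j c0 \<omega> z \<rho> M j xr' y))
                           + (\<Sum>j<J. Iu (\<lambda>y. cnj (P1j c0 \<omega> z \<rho> M j xr y) * Ef k xr' y)))
     + complex_of_real t ^ 2 * C"
      unfolding Q_def C_def k_def by (rule Q_expand)
    have "Q t = A' + complex_of_real t * (Qexp c0 \<omega> J z \<rho> M xr xr' - A') + complex_of_real t ^ 2 * C"
      unfolding QE A B ..
    then show ?thesis unfolding Qexp_lin A'_def[symmetric] by simp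
  qed
  have big: "(\<lambda>t. Q t - Qexp c0 \<omega> J z (complex_of_real t * \<rho>) (scaleM t M) xr xr') \<in> O[at 0](\<lambda>t. complex_of_real (t^2))"
    unfolding eq
    by (rule bigoI[where c="norm C"]) (intro always_eventually allI, simp add: norm_mult)
  show ?thesis using lim big by blast
qed


end
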